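(* Let $p,q$ be distinct odd primes with $p\equiv 1\pmod 4$, $q\equiv 3\pmod 4$ and $\gcd(p-1,q-1)=2$, having a common primitive root $g$. Let $s=(s_0,\dots,s_{N-1})$ be the balanced Whiteman generalized cyclotomic sequence of period $N=pq$ defined in the context, and let $A=(a_{i,j})_{0\le i,j\le N-1}$ be the $N\times N$ rational matrix with $a_{i,j}=s_{(i-j)\bmod N}$. Then $$\det(A)=\frac{pq-1}{2}\left(\frac{1-p}{4}\right)^{\frac{p-1}{2}}\left(\frac{1+q}{4}\right)^{\frac{q-1}{2}}\Delta^{e/2},$$ where $e=(p-1)(q-1)/2$, $d=\frac{q-p-2}{4}$, and $$\Delta=\frac{(1+pq)^{2}}{16}+\frac{\epsilon-d}{2}\,pq+d^{2}+\frac{3}{2}d+\frac{1}{2}$$ for some sign $\epsilon\in\{1,-1\}$.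
   Context: Let $N=pq$ and $e=(p-1)(q-1)/2$. Let $x$ be the unique element of $\mathbb{Z}_N$ with $x\equiv g\pmod p$ and $x\equiv 1\pmod q$. The Whiteman generalized cyclotomic classes of order 2 are $D_i=\{g^{s}x^{i}\bmod N: s=0,1,\dots,e-1\}$ for $i=0,1$; they partition $\mathbb{Z}_N^{*}$. For a prime $r\in\{p,q\}$, let $D_0^{(r)}=\{g^{2t}\bmod r: 0\le t\le \frac{r-1}{2}-1\}$ and $D_1^{(r)}=\{g^{2t+1}\bmod r: 0\le t\le \frac{r-1}{2}-1\}$. For $j=0,1$ let $D_j^{(p)}q=\{yq\bmod N: y\in D_j^{(p)}\}$ and $D_j^{(q)}p=\{yp\bmod N: y\in D_j^{(q)}\}$. Define $C_0=\{0\}\cup D_0\cup D_0^{(p)}q\cup D_0^{(q)}p$ and $C_1=D_1\cup D_1^{(p)}q\cup D_1^{(q)}p$, so $\mathbb{Z}_N=C_0\cup C_1$ (disjoint). The sequence $s=\{s_i\}$ of period $N$ is defined by $s_i=0$ if $i\bmod N\in C_0$ and $s_i=1$ if $i\bmod N\in C_1$. *)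

theory Defs
  imports "HOL-Number_Theory.Number_Theory" "Jordan_Normal_Form.Determinant"
begin

definition wm_e :: "nat \<Rightarrow> nat \<Rightarrow> nat" where
  "wm_e p q = (p - 1) * (q - 1) div 2"

definition wm_x :: "nat \<Rightarrow> nat \<Rightarrow> nat \<Rightarrow> nat" where
  "wm_x p q g = (THE x. x < p * q \<and> [x = g] (mod p) \<and> [x = 1] (mod q))"

definition wm_D :: "nat \<Rightarrow> nat \<Rightarrow> nat \<Rightarrow> nat \<Rightarrow> nat set" where
  "wm_D p q g i = {(g ^ s * wm_x p q g ^ i) mod (p * q) | s. s < wm_e p q}"

definition cyc_D :: "nat \<Rightarrow> nat \<Rightarrow> nat \<Rightarrow> nat set" where
  "cyc_D r g j = {g ^ (2 * t + j) mod r | t. t < (r - 1) div 2}"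

definition wm_C0 :: "nat \<Rightarrow> nat \<Rightarrow> nat \<Rightarrow> nat set" where
  "wm_C0 p q g = {0} \<union> wm_D p q g 0
     \<union> {(y * q) mod (p * q) | y. y \<in> cyc_D p g 0}
     \<union> {(y * p) mod (p * q) | y. y \<in> cyc_D q g 0}"

definition wm_C1 :: "nat \<Rightarrow> nat \<Rightarrow> nat \<Rightarrow> nat set" where
  "wm_C1 p q g = wm_D p q g 1
     \<union> {(y * q) mod (p * q) | y. y \<in> cyc_D p g 1}
     \<union> {(y * p) mod (p * q) | y. y \<in> cyc_D q g 1}"

definition wm_seq :: "nat \<Rightarrow> nat \<Rightarrow> nat \<Rightarrow> nat \<Rightarrow> rat" where
  "wm_seq p q g i = (if i mod (p * q) \<in> wm_C1 p q g then 1 else 0)"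

definition wm_matrix :: "nat \<Rightarrow> nat \<Rightarrow> nat \<Rightarrow> rat mat" where
  "wm_matrix p q g = mat (p * q) (p * q)
     (\<lambda>(i, j). wm_seq p q g (nat ((int i - int j) mod int (p * q))))"

end

theory Submission
  imports Defs
begin

lemma leg_cong:
  assumes "[a = b] (mod m)" shows "Legendre a m = Legendre b m"
proof -
  have "[a = 0] (mod m) \<longleftrightarrow> [b = 0] (mod m)"
    using assms by (meson cong_sym cong_trans)
  moreover have "QuadRes m a \<longleftrightarrow> QuadRes m b"
    using assms unfolding QuadRes_def by (meson cong_sym cong_trans)
  ultimately show ?thesis unfolding Legendre_def by simp
qed

lemma leg_mod: "Legendre (a mod m) m = Legendre a m"
  by (rule leg_cong) (simp add: cong_def)

lemma leg_vals: "Legendre a m = 0 \<or> Legendre a m = 1 \<or> Legendre a m = -1"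
  by (simp add: Legendre_def)

lemma small_cong_eq:
  fixes x y :: int
  assumes "[x = y] (mod int r)" "2 < r" "\<bar>x\<bar> \<le> 1" "\<bar>y\<bar> \<le> 1"
  shows "x = y"
proof -
  have "int r dvd (x - y)" using assms(1) by (simp add: cong_iff_dvd_diff cong_sym_eq)
  then obtain k where k: "x - y = int r * k" by (auto simp: dvd_def)
  have "\<bar>x - y\<bar> \<le> 2" using assms by linarith
  show ?thesis
  proof (cases "k = 0")
    case True thus ?thesis using k by simp
  next
    case False
    hence "\<bar>int r * k\<bar> \<ge> int r" by (simp add: abs_mult) (smt (verit) mult_le_cancel_left1 of_nat_0_le_iff)
    thus ?thesis using k \<open>\<bar>x - y\<bar> \<le> 2\<close> assms(2) by linarith
  qed
qed

lemma leg_abs: "\<bar>Legendre a m\<bar> \<le> 1"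
  using leg_vals[of a m] by auto

lemma leg_mult:
  assumes "prime r" "2 < r"
  shows "Legendre (a * b) (int r) = Legendre a (int r) * Legendre b (int r)"
proof -
  have "[Legendre (a*b) (int r) = (a*b) ^ ((r - 1) div 2)] (mod int r)"
    using euler_criterion assms by blast
  moreover have "[Legendre a (int r) * Legendre b (int r) = a ^ ((r - 1) div 2) * b ^ ((r - 1) div 2)] (mod int r)"
    using euler_criterion assms cong_mult by blast
  ultimately have "[Legendre (a * b) (int r) = Legendre a (int r) * Legendre b (int r)] (mod int r)"
    by (metis cong_sym cong_trans power_mult_distrib)
  moreover have "\<bar>Legendre a (int r) * Legendre b (int r)\<bar> \<le> 1"
    using leg_abs[of a "int r"] leg_abs[of b "int r"] by (simp add: abs_mult mult_le_one)
  ultimately show ?thesis using small_cong_eq assms(2) leg_abs by blast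
qed

lemma leg_minus_one:
  assumes "prime r" "2 < r"
  shows "Legendre (-1) (int r) = (-1) ^ ((r - 1) div 2)"
proof -
  have "[Legendre (-1) (int r) = (-1) ^ ((r - 1) div 2)] (mod int r)"
    using euler_criterion assms by blast
  moreover have "\<bar>(-1::int) ^ ((r - 1) div 2)\<bar> \<le> 1" by (simp add: power_abs)
  ultimately show ?thesis using small_cong_eq assms(2) leg_abs by blast
qed

lemma leg_zero_iff:
  "Legendre a m = 0 \<longleftrightarrow> [a = 0] (mod m)"
  by (simp add: Legendre_def)

lemma leg_sq:
  assumes "\<not> [a = 0] (mod m)" shows "Legendre a m * Legendre a m = 1"
  using assms by (simp add: Legendre_def)

lemma leg_primroot:
  assumes "prime r" "2 < r" "residue_primroot r g"
  shows "Legendre (int g) (int r) = -1"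
proof -
  have cop: "coprime r g" and ord: "ord r g = r - 1"
    using assms by (auto simp: residue_primroot_def totient_prime)
  have nz: "\<not> [int g = 0] (mod int r)"
  proof
    assume "[int g = 0] (mod int r)"
    hence "r dvd g" by (simp add: cong_0_iff flip: of_nat_dvd_iff)
    hence "r dvd gcd r g" by simp
    with cop assms(1) show False by (simp add: prime_gt_1_nat)
  qed
  have "[Legendre (int g) (int r) = int g ^ ((r - 1) div 2)] (mod int r)"
    using euler_criterion assms by blast
  moreover have "\<not> [int g ^ ((r - 1) div 2) = 1] (mod int r)"
  proof
    assume "[int g ^ ((r - 1) div 2) = 1] (mod int r)"
    hence "[g ^ ((r - 1) div 2) = 1] (mod r)"
      by (metis cong_int_iff of_nat_1 of_nat_power)
    hence "ord r g dvd (r - 1) div 2" by (simp add: ord_divides')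
    moreover have "(r - 1) div 2 > 0" using assms by auto
    ultimately have "r - 1 \<le> (r - 1) div 2" using ord by (metis dvd_imp_le)
    thus False using assms by auto
  qed
  ultimately show ?thesis using nz leg_vals[of "int g" "int r"]
    by (auto simp: Legendre_def cong_sym_eq split: if_splits)
qed

lemma reindex_mod_sum:
  fixes f :: "int \<Rightarrow> 'a::comm_monoid_add"
  assumes r: "prime r" and u: "\<not> [u = 0] (mod int r)"
    and per: "\<And>x. f (x mod int r) = f x"
  shows "(\<Sum>a<r. f (u * int a + v)) = (\<Sum>a<r. f (int a))"
proof -
  define h where "h a = nat ((u * int a + v) mod int r)" for a
  have rpos: "int r > 0" using r prime_gt_0_nat by simp
  have cop: "coprime u (int r)"
  proof -
    have "prime (int r)" using r by simp
    moreover have "\<not> int r dvd u" using u by (simp add: cong_0_iff)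
    ultimately show ?thesis using prime_imp_coprime coprime_commute by blast
  qed
  have inj: "inj_on h {..<r}"
  proof
    fix a b assume ab: "a \<in> {..<r}" "b \<in> {..<r}" "h a = h b"
    hence "(u * int a + v) mod int r = (u * int b + v) mod int r"
      using rpos unfolding h_def by (simp add: nat_eq_iff2)
    hence "[u * int a + v = u * int b + v] (mod int r)" by (simp add: cong_def)
    hence "[u * int a = u * int b] (mod int r)" by (simp add: cong_add_rcancel)
    hence "[int a = int b] (mod int r)" using cop by (simp add: cong_mult_lcancel)
    hence "int r dvd int a - int b" by (simp add: cong_iff_dvd_diff)
    moreover have "\<bar>int a - int b\<bar> < int r" using ab by auto
    ultimately have "int a - int b = 0"
      using dvd_imp_le_int[of "int a - int b" "int r"] by force
    thus "a = b" by simp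
  qed
  have img: "h ` {..<r} = {..<r}"
  proof (rule card_subset_eq)
    show "h ` {..<r} \<subseteq> {..<r}" using rpos by (auto simp: h_def nat_less_iff)
    show "card (h ` {..<r}) = card {..<r}" using inj by (simp add: card_image)
  qed auto
  have "(\<Sum>a<r. f (int a)) = (\<Sum>a\<in>h ` {..<r}. f (int a))" using img by simp
  also have "\<dots> = (\<Sum>a<r. f (int (h a)))" using inj by (simp add: sum.reindex)
  also have "\<dots> = (\<Sum>a<r. f (u * int a + v))"
    using rpos by (intro sum.cong) (auto simp: h_def per)
  finally show ?thesis by simp
qed

context
  fixes r g :: nat
  assumes r: "prime r" "2 < r" and g: "residue_primroot r g"
begin

definition chi :: "int \<Rightarrow> int" where "chi a = Legendre a (int r)"

lemma chi_per: "chi (x mod int r) = chi x"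
  by (simp add: chi_def leg_mod)

lemma chi_mult: "chi (a * b) = chi a * chi b"
  using leg_mult r by (simp add: chi_def)

lemma chi_g: "chi (int g) = -1"
  using leg_primroot r g by (simp add: chi_def)

lemma chi_sq: "\<not> [a = 0] (mod int r) \<Longrightarrow> chi a * chi a = 1"
  by (simp add: chi_def leg_sq)

lemma chi_0: "[a = 0] (mod int r) \<Longrightarrow> chi a = 0"
  by (simp add: chi_def leg_zero_iff)

lemma g_nz: "\<not> [int g = 0] (mod int r)"
  using chi_g chi_0 by auto

lemma chi_sum0: "(\<Sum>a<r. chi (int a)) = 0"
proof -
  have "(\<Sum>a<r. chi (int a)) = (\<Sum>a<r. chi (int g * int a + 0))"
    using reindex_mod_sum[OF r(1) g_nz, of chi 0] chi_per by simp
  also have "\<dots> = - (\<Sum>a<r. chi (int a))"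
    by (simp add: chi_mult chi_g sum_negf)
  finally show ?thesis by simp
qed

lemma chi_sum_shift: "(\<Sum>a<r. chi (int a + v)) = 0"
  using reindex_mod_sum[OF r(1), of 1 "\<lambda>x. chi x" v] chi_per chi_sum0 r(2)
  by (simp add: cong_def)

definition S :: "int \<Rightarrow> int" where "S d = (\<Sum>a<r. chi (int a) * chi (int a + d))"

lemma S0: "S 0 = int r - 1"
proof -
  have "S 0 = (\<Sum>a\<in>{..<r} - {0}. chi (int a) * chi (int a))"
    by (simp add: S_def sum.remove[of "{..<r}" 0] chi_0 prime_gt_0_nat r)
  also have "\<dots> = (\<Sum>a\<in>{..<r} - {0}. 1)"
  proof (intro sum.cong refl chi_sq)
    fix a assume "a \<in> {..<r} - {0}"
    thus "\<not> [int a = 0] (mod int r)" by (auto simp: cong_0_iff)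
  qed
  also have "\<dots> = int r - 1" using r by (simp add: prime_gt_0_nat of_nat_diff)
  finally show ?thesis .
qed

lemma S_per: "[d = d'] (mod int r) \<Longrightarrow> S d = S d'"
  unfolding S_def
  by (intro sum.cong refl) (metis chi_per cong_add_lcancel cong_def)

lemma S_scale:
  assumes "\<not> [d = 0] (mod int r)" shows "S d = S 1"
proof -
  have "S d = (\<Sum>a<r. chi (d * int a + 0) * chi (d * int a + 0 + d))"
    unfolding S_def
    by (rule reindex_mod_sum[OF r(1) assms, of "\<lambda>x. chi x * chi (x + d)" 0, symmetric])
       (metis chi_per mod_add_left_eq)
  also have "\<dots> = (\<Sum>a<r. (chi d * chi d) * (chi (int a) * chi (int a + 1)))"
    by (intro sum.cong refl)
       (simp add: chi_mult[symmetric] algebra_simps)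
  also have "\<dots> = S 1" using chi_sq[OF assms] by (simp add: S_def)
  finally show ?thesis .
qed

lemma S_total: "(\<Sum>d<r. S (int d)) = 0"
proof -
  have "(\<Sum>d<r. S (int d)) = (\<Sum>a<r. chi (int a) * (\<Sum>d<r. chi (int d + int a)))"
    unfolding S_def by (subst sum.swap) (simp add: sum_distrib_left add.commute)
  also have "\<dots> = 0" by (simp add: chi_sum_shift)
  finally show ?thesis .
qed

lemma S1: "S 1 = -1"
proof -
  have r0: "0 \<in> {..<r}" using r by (simp add: prime_gt_0_nat)
  have "(\<Sum>d<r. S (int d)) = S 0 + (\<Sum>d\<in>{..<r} - {0}. S (int d))"
    using sum.remove[OF _ r0, of "\<lambda>d. S (int d)"] by simp
  also have "(\<Sum>d\<in>{..<r} - {0}. S (int d)) = (\<Sum>d\<in>{..<r} - {0}. S 1)"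
  proof (intro sum.cong refl S_scale)
    fix d assume "d \<in> {..<r} - {0}"
    thus "\<not> [int d = 0] (mod int r)" by (auto simp: cong_0_iff)
  qed
  also have "\<dots> = (int r - 1) * S 1" using r by (simp add: prime_gt_0_nat of_nat_diff)
  finally have "0 = (int r - 1) + (int r - 1) * S 1" using S_total S0 by simp
  hence "(int r - 1) * (S 1 + 1) = 0" by (simp add: distrib_left)
  thus ?thesis using r by auto
qed

lemma S_val: "S d = (if [d = 0] (mod int r) then int r - 1 else -1)"
  using S0 S1 S_per S_scale by auto

lemma chi_corr:
  "(\<Sum>a<r. chi (i - int a) * chi (int a - j)) =
     chi (-1) * (if [i = j] (mod int r) then int r - 1 else -1)"
proof -
  have "(\<Sum>a<r. chi (i - int a) * chi (int a - j)) = chi (-1) * (\<Sum>a<r. chi (int a - i) * chi (int a - j))"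
    by (simp add: sum_distrib_left chi_mult[symmetric] algebra_simps)
  also have "(\<Sum>a<r. chi (int a - i) * chi (int a - j)) = (\<Sum>a<r. chi (1 * int a + (- i)) * chi (1 * int a + (- i) + (i - j)))"
    by simp
  also have "\<dots> = S (i - j)"
    unfolding S_def
    by (rule reindex_mod_sum[OF r(1), of 1 "\<lambda>x. chi x * chi (x + (i - j))"])
       (use r in \<open>auto simp: cong_def intro: chi_per mod_add_left_eq\<close>, metis chi_per mod_add_left_eq)
  also have "\<dots> = (if [i = j] (mod int r) then int r - 1 else -1)"
    by (simp add: S_val cong_iff_dvd_diff cong_0_iff)
  finally show ?thesis .
qed

end

lemma mat_mult_mat:
  "mat n n f * mat n n h = mat n n (\<lambda>(i,j). \<Sum>k = 0..<n. f (i,k) * h (k,j))"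
  by (rule eq_matI) (auto simp: scalar_prod_def)

lemma det_conj_perm:
  assumes s: "\<sigma> permutes {0..<n}"
  shows "det (mat n n (\<lambda>(i,j). f (\<sigma> i) (\<sigma> j))) = det (mat n n (\<lambda>(i,j). f i j))"
proof -
  have si: "\<And>i. i < n \<Longrightarrow> \<sigma> i < n" using permutes_in_image[OF s] by auto
  define A where "A = mat n n (\<lambda>(i,j). f i (\<sigma> j))"
  define B where "B = mat n n (\<lambda>(i,j). f j i)"
  have A: "A \<in> carrier_mat n n" and B: "B \<in> carrier_mat n n" by (auto simp: A_def B_def)
  have "det (mat n n (\<lambda>(i,j). A $$ (\<sigma> i, j))) = of_int (sign \<sigma>) * det A"
    by (rule det_permute_rows[OF A s])
  moreover have "mat n n (\<lambda>(i,j). A $$ (\<sigma> i, j)) = mat n n (\<lambda>(i,j). f (\<sigma> i) (\<sigma> j))"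
    by (rule eq_matI) (auto simp: A_def si)
  moreover have "det A = det (transpose_mat A)" using det_transpose[OF A] by simp
  moreover have "transpose_mat A = mat n n (\<lambda>(i,j). B $$ (\<sigma> i, j))"
    by (rule eq_matI) (auto simp: A_def B_def si)
  moreover have "det (mat n n (\<lambda>(i,j). B $$ (\<sigma> i, j))) = of_int (sign \<sigma>) * det B"
    by (rule det_permute_rows[OF B s])
  moreover have "det B = det (transpose_mat B)" using det_transpose[OF B] by simp
  moreover have "transpose_mat B = mat n n (\<lambda>(i,j). f i j)"
    by (rule eq_matI) (auto simp: B_def)
  moreover have "(of_int (sign \<sigma>) :: 'a) * of_int (sign \<sigma>) = 1"
    by (simp add: sign_def)
  ultimately show ?thesis by (metis (no_types, lifting) mult.assoc mult_1)
qed

lemma det_poly: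
  fixes X :: "'a::field mat"
  shows "\<exists>F. \<forall>t. det (mat n n (\<lambda>(i,j). (if i = j then 1 else 0) + t * X $$ (i,j))) = poly F t"
proof -
  define F where "F = (\<Sum>p\<in>{p. p permutes {0..<n}}. [:of_int (sign p):] *
      (\<Prod>i = 0..<n. [:(if i = p i then 1 else 0), X $$ (i, p i):]))"
  have "det (mat n n (\<lambda>(i,j). (if i = j then 1 else 0) + t * X $$ (i,j))) = poly F t" for t
    unfolding det_def' [OF mat_carrier] F_def poly_sum poly_mult poly_prod
    by (intro sum.cong refl arg_cong2[where f="(*)"] prod.cong) (auto simp: permutes_in_image)
  thus ?thesis by blast
qed

lemma poly_sq_eq:
  fixes F H :: "'a::{field,ring_char_0} poly"
  assumes "\<And>t. poly F t ^ 2 = poly H t ^ 2" "poly F 0 = poly H 0" "poly H 0 \<noteq> 0"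
  shows "F = H"
proof -
  have "poly (F^2) = poly (H^2)" using assms(1) by (auto simp: poly_power)
  hence "F^2 = H^2" by (simp add: poly_eq_poly_eq_iff)
  hence "(F - H) * (F + H) = 0" by (simp add: power2_eq_square algebra_simps)
  hence "F = H \<or> F = -H" by (auto simp: eq_neg_iff_add_eq_0)
  thus ?thesis using assms(2,3) by auto
qed

lemma card_class:
  assumes "l < m" "n = c * m"
  shows "card {j\<in>{0..<n}. j mod m = l} = c"
proof -
  have "{j\<in>{0..<n}. j mod m = l} = (\<lambda>t. l + m * t) ` {0..<c}"
  proof (intro equalityI subsetI)
    fix j assume j: "j \<in> {j\<in>{0..<n}. j mod m = l}"
    hence "j = l + m * (j div m)" by (metis (mono_tags) mem_Collect_eq mod_mult_div_eq add.commute)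
    moreover have "j div m < c" using j assms by (auto simp: div_less_iff_less_mult)
    ultimately show "j \<in> (\<lambda>t. l + m * t) ` {0..<c}" by force
  next
    fix j assume "j \<in> (\<lambda>t. l + m * t) ` {0..<c}"
    then obtain t where t: "t < c" "j = l + m * t" by auto
    have "l + m * t < m + m * t" using assms by simp
    also have "\<dots> = m * (t + 1)" by simp
    also have "\<dots> \<le> m * c" using t by (intro mult_le_mono2) simp
    finally show "j \<in> {j\<in>{0..<n}. j mod m = l}" using t assms by (auto simp: mult.commute)
  qed
  moreover have "inj_on (\<lambda>t. l + m * t) {0..<c}" using assms by (auto simp: inj_on_def)
  ultimately show ?thesis by (simp add: card_image)
qed

lemma det_aI_bK:
  fixes a b :: "'a::comm_ring_1"
  assumes m: "0 < m" and n: "n = c * m" and c: "0 < c"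
  shows "det (mat n n (\<lambda>(i,j). (if i = j then a else 0) + (if i mod m = j mod m then b else 0)))
         = (a + b * of_nat c) ^ m * a ^ (n - m)"
proof -
  have False: "c \<noteq> 0" using c by simp
  hence mn: "m \<le> n" using n by simp
  define M where "M = mat n n (\<lambda>(i,j). (if i = j then a else 0) + (if i mod m = j mod m then b else 0))"
  define T :: "'a mat" where "T = mat n n (\<lambda>(i,k). (if i = k then 1 else 0) - (if m \<le> i \<and> k = i mod m then 1 else 0))"
  define U :: "'a mat" where "U = mat n n (\<lambda>(j,l). (if j = l then 1 else 0) + (if m \<le> j \<and> l = j mod m then 1 else 0))"
  define TM where "TM = (\<lambda>(i,j). if m \<le> i then (if i = j then a else 0) - (if j = i mod m then a else 0)
                                   else (if i = j then a else 0) + (if i mod m = j mod m then b else 0))"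
  define R where "R = (\<lambda>(i,l). if m \<le> i then (if i = l then a else 0)
       else if l < m then (if i = l then a + b * of_nat c else 0) else (if i = l mod m then b else 0))"
  have imod: "i mod m < n" for i using m mn by (meson mod_less_divisor order_less_le_trans)
  have TMe: "T * M = mat n n TM"
  proof -
    have "T * M = mat n n (\<lambda>(i,j). \<Sum>k = 0..<n. ((if i = k then 1 else 0) - (if m \<le> i \<and> k = i mod m then 1 else 0)) *
        ((if k = j then a else 0) + (if k mod m = j mod m then b else 0)))"
      unfolding T_def M_def mat_mult_mat by (simp add: case_prod_beta)
    also have "\<dots> = mat n n TM"
    proof (rule eq_matI)
      fix i j assume ij: "i < dim_row (mat n n TM)" "j < dim_col (mat n n TM)"
      have "(\<Sum>k = 0..<n. ((if i = k then 1 else 0) - (if m \<le> i \<and> k = i mod m then 1 else 0)) *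
        ((if k = j then a else 0) + (if k mod m = j mod m then b else 0)))
        = (\<Sum>k = 0..<n. (if i = k then (if k = j then a else 0) + (if k mod m = j mod m then b else 0) else 0))
          - (\<Sum>k = 0..<n. (if m \<le> i \<and> k = i mod m then (if k = j then a else 0) + (if k mod m = j mod m then b else 0) else 0))"
        by (subst sum_subtractf[symmetric], intro sum.cong refl) (simp add: left_diff_distrib)
      also have "(\<Sum>k = 0..<n. (if m \<le> i \<and> k = i mod m then (if k = j then a else 0) + (if k mod m = j mod m then b else 0) else 0))
          = (if m \<le> i then (if i mod m = j then a else 0) + (if i mod m = j mod m then b else 0) else 0)"
        using imod[of i] by (cases "m \<le> i") simp_all
      also have "(\<Sum>k = 0..<n. (if i = k then (if k = j then a else 0) + (if k mod m = j mod m then b else 0) else 0))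
          = (if i = j then a else 0) + (if i mod m = j mod m then b else 0)" using ij by simp
      also have "(if i = j then a else 0) + (if i mod m = j mod m then b else 0) -
          (if m \<le> i then (if i mod m = j then a else 0) + (if i mod m = j mod m then b else 0) else 0) = TM (i,j)"
        by (auto simp: TM_def)
      finally show "mat n n (\<lambda>(i,j). \<Sum>k = 0..<n. ((if i = k then 1 else 0) - (if m \<le> i \<and> k = i mod m then 1 else 0)) *
        ((if k = j then a else 0) + (if k mod m = j mod m then b else 0))) $$ (i,j) = mat n n TM $$ (i,j)"
        using ij by simp
    qed auto
    finally show ?thesis .
  qed
  have cnt: "(\<Sum>j = 0..<n. if m \<le> j \<and> l = j mod m then (x::'a) else 0) = x * (of_nat c - 1)" if l: "l < m" for l x
  proof -
    have "(\<Sum>j = 0..<n. if m \<le> j \<and> l = j mod m then (x::'a) else 0)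
        = (\<Sum>j\<in>{j\<in>{0..<n}. m \<le> j \<and> l = j mod m}. x)"
      by (rule sum.inter_filter[symmetric]) simp
    also have "{j\<in>{0..<n}. m \<le> j \<and> l = j mod m} = {j\<in>{0..<n}. j mod m = l} - {l}"
      using l by auto (metis mod_less not_le)
    also have "(\<Sum>j\<in>{j\<in>{0..<n}. j mod m = l} - {l}. x) = of_nat (c - 1) * x"
    proof -
      have "l \<in> {j\<in>{0..<n}. j mod m = l}" using l mn by auto
      hence "card ({j\<in>{0..<n}. j mod m = l} - {l}) = c - 1"
        using card_class[OF l n] by (subst card_Diff_singleton) auto
      thus ?thesis by simp
    qed
    finally show ?thesis using False by (simp add: of_nat_diff mult.commute)
  qed
  have jm: "m \<le> j \<Longrightarrow> j \<noteq> i mod m" for i j using m by (metis mod_less_divisor not_le)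
  have TMU: "mat n n TM * U = mat n n R"
  proof (rule eq_matI)
    fix i l assume il: "i < dim_row (mat n n R)" "l < dim_col (mat n n R)"
    have "(mat n n TM * U) $$ (i,l) = (\<Sum>j = 0..<n. TM (i,j) * ((if j = l then 1 else 0) + (if m \<le> j \<and> l = j mod m then 1 else 0)))"
      unfolding U_def mat_mult_mat using il by simp
    also have "\<dots> = TM (i,l) + (\<Sum>j = 0..<n. if m \<le> j \<and> l = j mod m then TM (i,j) else 0)"
    proof -
      have "(\<Sum>j = 0..<n. TM (i,j) * ((if j = l then 1 else 0) + (if m \<le> j \<and> l = j mod m then 1 else 0)))
        = (\<Sum>j = 0..<n. (if j = l then TM (i,j) else 0) + (if m \<le> j \<and> l = j mod m then TM (i,j) else 0))"
        by (intro sum.cong refl) simp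
      also have "\<dots> = TM (i,l) + (\<Sum>j = 0..<n. if m \<le> j \<and> l = j mod m then TM (i,j) else 0)"
        using il by (simp add: sum.distrib)
      finally show ?thesis .
    qed
    also have "\<dots> = R (i,l)"
    proof (cases "m \<le> i")
      case True
      have "(\<Sum>j = 0..<n. if m \<le> j \<and> l = j mod m then TM (i,j) else 0)
          = (\<Sum>j = 0..<n. if j = i then (if l = i mod m then a else 0) else 0)"
        using True by (intro sum.cong refl) (simp add: TM_def jm)
      also have "\<dots> = (if l = i mod m then a else 0)" using il by simp
      finally show ?thesis using True by (auto simp: TM_def R_def)
    next
      case False
      have "(\<Sum>j = 0..<n. if m \<le> j \<and> l = j mod m then TM (i,j) else 0)
          = (\<Sum>j = 0..<n. if m \<le> j \<and> l = j mod m then (if i = l then b else 0) else 0)"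
      proof (intro sum.cong refl)
        fix j assume "j \<in> {0..<n}"
        have "i mod m = i" using False by simp
        thus "(if m \<le> j \<and> l = j mod m then TM (i,j) else 0) = (if m \<le> j \<and> l = j mod m then (if i = l then b else 0) else 0)"
          using False by (auto simp: TM_def)
      qed
      also have "\<dots> = (if i = l \<and> l < m then b * (of_nat c - 1) else 0)"
        using m by (cases "l < m") (auto simp: cnt intro!: sum.neutral)
      moreover have "i mod m = i" using False by simp
      ultimately show ?thesis using False
        by (cases "l < m"; cases "i = l") (simp_all add: TM_def R_def algebra_simps)
    qed
    finally show "(mat n n TM * U) $$ (i,l) = mat n n R $$ (i,l)" using il by simp
  qed (auto simp: U_def)
  have nm: "m \<le> i \<Longrightarrow> i mod m \<noteq> i" for i using m by (metis mod_less_divisor not_le)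
  have detT: "det T = 1"
  proof -
    have "det T = prod_list (diag_mat T)"
      by (rule det_lower_triangular[of n]) (auto simp: T_def, meson mod_less_eq_dividend leD)
    also have "\<dots> = 1" unfolding T_def
      unfolding prod_list_diag_prod by (intro prod.neutral) (auto simp: nm, metis nm)
    finally show ?thesis .
  qed
  have detU: "det U = 1"
  proof -
    have "det U = prod_list (diag_mat U)"
      by (rule det_lower_triangular[of n]) (auto simp: U_def, meson mod_less_eq_dividend leD)
    also have "\<dots> = 1" unfolding prod_list_diag_prod U_def
      by (intro prod.neutral) (auto simp: nm, metis nm)
    finally show ?thesis .
  qed
  have detR: "det (mat n n R) = (a + b * of_nat c) ^ m * a ^ (n - m)"
  proof -
    have "det (mat n n R) = prod_list (diag_mat (mat n n R))"
      by (rule det_upper_triangular[of _ n]) (auto simp: R_def upper_triangular_def)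
    also have "\<dots> = (\<Prod>i = 0..<n. if i < m then a + b * of_nat c else a)"
      unfolding prod_list_diag_prod by (intro prod.cong refl) (auto simp: R_def)
    also have "\<dots> = (\<Prod>i\<in>{0..<m}. a + b * of_nat c) * (\<Prod>i\<in>{m..<n}. a)"
    proof -
      have "{0..<n} = {0..<m} \<union> {m..<n}" using mn by auto
      hence "(\<Prod>i = 0..<n. if i < m then a + b * of_nat c else a)
        = (\<Prod>i\<in>{0..<m}. if i < m then a + b * of_nat c else a) * (\<Prod>i\<in>{m..<n}. if i < m then a + b * of_nat c else a)"
        by (simp add: prod.union_disjoint ivl_disj_int_one(2))
      thus ?thesis by simp
    qed
    also have "\<dots> = (a + b * of_nat c) ^ m * a ^ (n - m)" by simp
    finally show ?thesis .
  qed
  have Tc: "T \<in> carrier_mat n n" and Mc: "M \<in> carrier_mat n n" and Uc: "U \<in> carrier_mat n n"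
    by (auto simp: T_def M_def U_def)
  have "det (T * M * U) = det T * det M * det U"
    using det_mult[OF mult_carrier_mat[OF Tc Mc] Uc] det_mult[OF Tc Mc] by simp
  hence "det M = det (mat n n R)" using TMe TMU detT detU by simp
  thus ?thesis using detR by (simp add: M_def)
qed

lemma fiber_bij:
  fixes r m i :: nat
  assumes cop: "coprime r m" and r: "0 < r" and m: "0 < m"
  shows "bij_betw (\<lambda>k. k mod r) {k\<in>{0..<r*m}. k mod m = i mod m} {0..<r}"
  unfolding bij_betw_def
proof (intro conjI inj_onI equalityI subsetI)
  fix k k' assume k: "k \<in> {k\<in>{0..<r*m}. k mod m = i mod m}" and k': "k' \<in> {k\<in>{0..<r*m}. k mod m = i mod m}"
    and eq: "k mod r = k' mod r"
  have "[k = k'] (mod r)" "[k = k'] (mod m)" using k k' eq by (auto simp: cong_def)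
  hence "[k = k'] (mod r * m)" using cop coprime_cong_mult_nat by blast
  thus "k = k'" using k k' cong_less_modulus_unique_nat by auto
next
  fix a assume "a \<in> (\<lambda>k. k mod r) ` {k\<in>{0..<r*m}. k mod m = i mod m}"
  thus "a \<in> {0..<r}" using r by auto
next
  fix a assume a: "a \<in> {0..<r}"
  obtain x where x: "[x = a] (mod r)" "[x = i] (mod m)" using binary_chinese_remainder_nat[OF cop] by blast
  have "x mod (r*m) mod r = a" using x a by (simp add: cong_def mod_mod_cancel)
  moreover have "x mod (r*m) mod m = i mod m" using x by (simp add: cong_def mod_mod_cancel)
  moreover have "x mod (r*m) < r*m" using r m by simp
  ultimately show "a \<in> (\<lambda>k. k mod r) ` {k\<in>{0..<r*m}. k mod m = i mod m}" by force
qed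

lemma fiber_sum:
  fixes G :: "nat \<Rightarrow> 'a::comm_monoid_add" and r m i :: nat
  assumes cop: "coprime r m" and r: "0 < r" and m: "0 < m"
    and GF: "\<And>k. k < r*m \<Longrightarrow> k mod m = i mod m \<Longrightarrow> G k = F (k mod r)"
  shows "(\<Sum>k = 0..<r*m. if k mod m = i mod m then G k else 0) = (\<Sum>a = 0..<r. F a)"
proof -
  have "(\<Sum>k = 0..<r*m. if k mod m = i mod m then G k else 0) = (\<Sum>k\<in>{k\<in>{0..<r*m}. k mod m = i mod m}. G k)"
    by (rule sum.inter_filter[symmetric]) simp
  also have "\<dots> = (\<Sum>k\<in>{k\<in>{0..<r*m}. k mod m = i mod m}. F (k mod r))"
    using GF by (intro sum.cong refl) auto
  also have "\<dots> = (\<Sum>a = 0..<r. F a)"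
    by (rule sum.reindex_bij_betw[OF fiber_bij[OF cop r m]])
  finally show ?thesis .
qed

lemma crt_eq:
  fixes r m i j :: nat
  assumes "coprime r m" "i < r*m" "j < r*m" "i mod m = j mod m" "[int i = int j] (mod int r)"
  shows "i = j"
proof -
  have "[i = j] (mod r)" using assms(5) by (simp add: cong_int_iff)
  moreover have "[i = j] (mod m)" using assms(4) by (simp add: cong_def)
  ultimately have "[i = j] (mod r*m)" using assms(1) coprime_cong_mult_nat by blast
  thus ?thesis using assms cong_less_modulus_unique_nat by auto
qed

definition Xf :: "nat \<Rightarrow> nat \<Rightarrow> nat \<Rightarrow> nat \<Rightarrow> rat" where
  "Xf r m i j = (if i mod m = j mod m then of_int (Legendre (int i - int j) (int r)) else 0)"

lemma leg_sub_mod: "Legendre (x - int (k mod r)) (int r) = Legendre (x - int k) (int r)"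
proof (rule leg_cong)
  have "[k mod r = k] (mod r)" by (simp add: cong_def)
  hence "[int (k mod r) = int k] (mod int r)" by (simp add: cong_int_iff)
  thus "[x - int (k mod r) = x - int k] (mod int r)" by (intro cong_diff cong_refl)
qed

lemma leg_sub_mod2: "Legendre (int (k mod r) - x) (int r) = Legendre (int k - x) (int r)"
proof (rule leg_cong)
  have "[k mod r = k] (mod r)" by (simp add: cong_def)
  hence "[int (k mod r) = int k] (mod int r)" by (simp add: cong_int_iff)
  thus "[int (k mod r) - x = int k - x] (mod int r)" by (intro cong_diff cong_refl)
qed

lemma X_cross:
  fixes r m i j :: nat
  assumes cop: "coprime r m" and r: "0 < r" and m: "0 < m" and i: "i < r*m" and j: "j < r*m"
  shows "(\<Sum>k = 0..<r*m. Xf r m i k * Xf m r k j) =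
    of_int (Legendre (int i - int j) (int r) * Legendre (int i - int j) (int m))"
proof -
  have "(\<Sum>k = 0..<r*m. Xf r m i k * Xf m r k j) =
    (\<Sum>k = 0..<r*m. if k mod m = i mod m then
       (if k mod r = j mod r then of_int (Legendre (int i - int k) (int r) * Legendre (int k - int j) (int m)) else 0) else 0)"
    by (intro sum.cong refl) (auto simp: Xf_def)
  also have "\<dots> = (\<Sum>a = 0..<r. if a = j mod r then of_int (Legendre (int i - int a) (int r) * Legendre (int i - int j) (int m)) else 0)"
  proof (rule fiber_sum[OF cop r m])
    fix k assume k: "k < r*m" "k mod m = i mod m"
    have e1: "Legendre (int k - int j) (int m) = Legendre (int i - int j) (int m)"
    proof (rule leg_cong)
      have "[k = i] (mod m)" using k by (simp add: cong_def)
      hence "[int k = int i] (mod int m)" by (simp add: cong_int_iff)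
      thus "[int k - int j = int i - int j] (mod int m)" by (intro cong_diff cong_refl)
    qed
    have e4: "Legendre (int i - int (j mod r)) (int r) = Legendre (int i - int j) (int r)"
      by (rule leg_sub_mod)
    show "(if k mod r = j mod r then of_int (Legendre (int i - int k) (int r) * Legendre (int k - int j) (int m)) else 0) =
      (if k mod r = j mod r then of_int (Legendre (int i - int (k mod r)) (int r) * Legendre (int i - int j) (int m)) else (0::rat))"
    proof (cases "k mod r = j mod r")
      case True
      have e3: "Legendre (int i - int k) (int r) = Legendre (int i - int j) (int r)"
      proof (rule leg_cong)
        have "[k = j] (mod r)" using True by (simp add: cong_def)
        hence "[int k = int j] (mod int r)" by (simp add: cong_int_iff)
        thus "[int i - int k = int i - int j] (mod int r)" by (intro cong_diff cong_refl)
      qed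
      show ?thesis using True e1 e3 e4 by simp
    qed simp
  qed
  also have "\<dots> = of_int (Legendre (int i - int (j mod r)) (int r) * Legendre (int i - int j) (int m))"
    using r by simp
  finally show ?thesis by (simp add: leg_sub_mod)
qed

context
  fixes r m g :: nat
  assumes r: "prime r" "2 < r" and m: "prime m" "2 < m" and rm: "r \<noteq> m"
    and g: "residue_primroot r g"
begin

lemma cop: "coprime r m" using r m rm by (simp add: primes_coprime)
lemma r0: "0 < r" using r by simp
lemma m0: "0 < m" using m by simp

lemma X_sq:
  assumes i: "i < r*m" and j: "j < r*m"
  shows "(\<Sum>k = 0..<r*m. Xf r m i k * Xf r m k j) =
    of_int (Legendre (-1) (int r)) * ((if i = j then of_nat r else 0) - (if i mod m = j mod m then 1 else 0))"
proof (cases "i mod m = j mod m")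
  case False
  have "(\<Sum>k = 0..<r*m. Xf r m i k * Xf r m k j) = 0"
    using False by (intro sum.neutral ballI) (auto simp: Xf_def)
  thus ?thesis using False by auto
next
  case True
  have "(\<Sum>k = 0..<r*m. Xf r m i k * Xf r m k j) =
     (\<Sum>k = 0..<r*m. if k mod m = i mod m then of_int (Legendre (int i - int k) (int r) * Legendre (int k - int j) (int r)) else 0)"
    using True by (intro sum.cong refl) (auto simp: Xf_def)
  also have "\<dots> = (\<Sum>a = 0..<r. of_int (Legendre (int i - int a) (int r) * Legendre (int a - int j) (int r)))"
    by (rule fiber_sum[OF cop r0 m0]) (simp add: leg_sub_mod leg_sub_mod2)
  also have "\<dots> = of_int (\<Sum>a<r. chi r (int i - int a) * chi r (int a - int j))"
    by (simp add: chi_def[OF r g] atLeast0LessThan)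
  also have "\<dots> = of_int (chi r (-1) * (if [int i = int j] (mod int r) then int r - 1 else - 1))"
    using chi_corr[OF r g] by simp
  also have "[int i = int j] (mod int r) \<longleftrightarrow> i = j" using crt_eq[OF cop i j True] by auto
  finally show ?thesis using True by (simp add: chi_def[OF r g] of_nat_diff algebra_simps)
qed

lemma X_rowsum:
  assumes i: "i < r*m"
  shows "(\<Sum>k = 0..<r*m. Xf r m i k) = 0"
proof -
  have "(\<Sum>k = 0..<r*m. Xf r m i k) =
     (\<Sum>k = 0..<r*m. if k mod m = i mod m then of_int (Legendre (int i - int k) (int r)) else 0)"
    by (intro sum.cong refl) (auto simp: Xf_def)
  also have "\<dots> = (\<Sum>a = 0..<r. of_int (Legendre (int i - int a) (int r)))"
    by (rule fiber_sum[OF cop r0 m0]) (simp add: leg_sub_mod)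
  also have "\<dots> = of_int (\<Sum>a<r. chi r (-1) * chi r (int a + (- int i)))"
  proof -
    have "Legendre (int i - int a) (int r) = Legendre (-1) (int r) * Legendre (int a - int i) (int r)" for a
      using leg_mult[OF r, of "-1" "int a - int i"] by simp
    thus ?thesis by (simp add: chi_def[OF r g] atLeast0LessThan)
  qed
  also have "\<dots> = 0"
  proof -
    have "(\<Sum>a<r. chi r (int a + (- int i))) = 0" by (rule chi_sum_shift[OF r g])
    thus ?thesis by (simp add: sum_distrib_left[symmetric] of_int_sum[symmetric] del: of_int_sum)
  qed
  finally show ?thesis .
qed


lemma sigma_exists:
  "\<exists>\<sigma>. \<sigma> permutes {0..<r*m} \<and>
     (\<forall>i<r*m. \<forall>j<r*m. Xf r m (\<sigma> i) (\<sigma> j) = - Xf r m i j \<and> (\<sigma> i = \<sigma> j \<longleftrightarrow> i = j))"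
proof -
  obtain \<nu> where nu: "[\<nu> = g] (mod r)" "[\<nu> = 1] (mod m)"
    using binary_chinese_remainder_nat[OF cop] by blast
  have cg: "coprime g r" using g by (simp add: residue_primroot_def coprime_commute)
  have "coprime \<nu> r" using nu(1) cg by (metis cong_imp_coprime cong_sym)
  moreover have "coprime \<nu> m" using nu(2) by (metis cong_imp_coprime cong_sym coprime_1_left)
  ultimately have cnu: "coprime \<nu> (r*m)" by simp
  define n where "n = r*m"
  have n0: "0 < n" using r0 m0 by (simp add: n_def)
  define \<sigma> where "\<sigma> i = (if i < n then (\<nu> * i) mod n else i)" for i
  have inj: "inj_on \<sigma> {0..<n}"
  proof
    fix i j assume ij: "i \<in> {0..<n}" "j \<in> {0..<n}" "\<sigma> i = \<sigma> j"
    hence "[\<nu> * i = \<nu> * j] (mod n)" by (simp add: \<sigma>_def cong_def)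
    hence "[i = j] (mod n)" using cnu by (simp add: n_def cong_mult_lcancel_nat coprime_commute)
    thus "i = j" using ij cong_less_modulus_unique_nat by auto
  qed
  have img: "\<sigma> ` {0..<n} = {0..<n}"
  proof (rule card_subset_eq[where A="\<sigma> ` {0..<n}" and B="{0..<n}"])
    show "card (\<sigma> ` {0..<n}) = card {0..<n}" using inj by (rule card_image)
    show "\<sigma> ` {0..<n} \<subseteq> {0..<n}" using n0 by (auto simp: \<sigma>_def)
  qed simp
  have bij: "bij_betw \<sigma> {0..<n} {0..<n}" using inj img by (simp add: bij_betw_def)
  have perm: "\<sigma> permutes {0..<n}"
    by (rule bij_imp_permutes[OF bij]) (simp add: \<sigma>_def)
  have sm: "[\<sigma> i = i] (mod m)" if "i < n" for i
  proof -
    have "[\<sigma> i = \<nu> * i] (mod m)" using that by (simp add: \<sigma>_def n_def cong_def mod_mod_cancel)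
    also have "[\<nu> * i = 1 * i] (mod m)" using nu(2) by (intro cong_mult cong_refl)
    finally show ?thesis by simp
  qed
  have sr: "[\<sigma> i = g * i] (mod r)" if "i < n" for i
  proof -
    have "[\<sigma> i = \<nu> * i] (mod r)" using that by (simp add: \<sigma>_def n_def cong_def mod_mod_cancel)
    also have "[\<nu> * i = g * i] (mod r)" using nu(1) by (intro cong_mult cong_refl)
    finally show ?thesis .
  qed
  have Xs: "Xf r m (\<sigma> i) (\<sigma> j) = - Xf r m i j" if "i < n" "j < n" for i j
  proof -
    have "\<sigma> i mod m = \<sigma> j mod m \<longleftrightarrow> i mod m = j mod m"
      using sm[OF that(1)] sm[OF that(2)] by (simp add: cong_def)
    moreover have "Legendre (int (\<sigma> i) - int (\<sigma> j)) (int r) = - Legendre (int i - int j) (int r)"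
    proof -
      have "[int (\<sigma> i) = int g * int i] (mod int r)" "[int (\<sigma> j) = int g * int j] (mod int r)"
        using sr[OF that(1)] sr[OF that(2)] by (simp_all add: cong_int_iff flip: of_nat_mult)
      hence "[int (\<sigma> i) - int (\<sigma> j) = int g * (int i - int j)] (mod int r)"
        by (simp add: cong_diff right_diff_distrib)
      hence "Legendre (int (\<sigma> i) - int (\<sigma> j)) (int r) = Legendre (int g * (int i - int j)) (int r)"
        by (rule leg_cong)
      also have "\<dots> = - Legendre (int i - int j) (int r)"
        using leg_mult[OF r] leg_primroot[OF r g] by simp
      finally show ?thesis .
    qed
    ultimately show ?thesis by (simp add: Xf_def)
  qed
  have ss: "\<sigma> i = \<sigma> j \<longleftrightarrow> i = j" if "i < n" "j < n" for i j
    using inj that by (auto simp: inj_on_def)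
  show ?thesis
    by (rule exI[of _ \<sigma>]) (use perm Xs ss in \<open>simp add: n_def\<close>)
qed

lemma n_minus_m: "r*m - m = 2 * ((r*m - m) div 2)"
proof -
  have "odd r" using r by (simp add: prime_odd_nat)
  hence "even (r - 1)" using r by simp
  then obtain k where k: "r - 1 = 2 * k" by (rule evenE)
  have "r*m - m = (r - 1) * m" by (simp add: diff_mult_distrib)
  also have "\<dots> = 2 * (k * m)" using k by simp
  finally show ?thesis by simp
qed

lemma det_X:
  "det (mat (r*m) (r*m) (\<lambda>(i,j). (if i = j then 1 else 0) + t * Xf r m i j)) =
     (1 - of_int (Legendre (-1) (int r)) * of_nat r * t^2) ^ ((r*m - m) div 2)"
proof -
  define n where "n = r*m"
  define s :: rat where "s = of_int (Legendre (-1) (int r))"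
  define D where "D t = det (mat n n (\<lambda>(i,j). (if i = j then 1 else 0) + t * Xf r m i j))" for t
  have Dsym: "D (-t) = D t" for t
  proof -
    obtain \<sigma> where s1: "\<sigma> permutes {0..<n}"
      and s2: "\<And>i j. i < n \<Longrightarrow> j < n \<Longrightarrow> Xf r m (\<sigma> i) (\<sigma> j) = - Xf r m i j \<and> (\<sigma> i = \<sigma> j \<longleftrightarrow> i = j)"
      using sigma_exists unfolding n_def by blast
    have "D t = det (mat n n (\<lambda>(i,j). (\<lambda>i j. (if i = j then 1 else 0) + t * Xf r m i j) (\<sigma> i) (\<sigma> j)))"
      unfolding D_def by (rule det_conj_perm[OF s1, symmetric])
    also have "mat n n (\<lambda>(i,j). (\<lambda>i j. (if i = j then 1 else 0) + t * Xf r m i j) (\<sigma> i) (\<sigma> j))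
       = mat n n (\<lambda>(i,j). (if i = j then 1 else 0) + (-t) * Xf r m i j)"
      by (rule eq_matI) (auto simp: s2)
    finally show ?thesis by (simp add: D_def)
  qed
  have Dprod: "D t * D (-t) = (1 - s * of_nat r * t^2) ^ (n - m)" for t
  proof -
    have c1: "mat n n (\<lambda>(i,j). (if i = j then 1 else 0) + t * Xf r m i j) \<in> carrier_mat n n" for t by simp
    have "D t * D (-t) = det (mat n n (\<lambda>(i,j). (if i = j then 1 else 0) + t * Xf r m i j) *
        mat n n (\<lambda>(i,j). (if i = j then 1 else 0) + (-t) * Xf r m i j))"
      unfolding D_def by (rule det_mult[OF c1 c1, symmetric])
    also have "mat n n (\<lambda>(i,j). (if i = j then 1 else 0) + t * Xf r m i j) *
        mat n n (\<lambda>(i,j). (if i = j then 1 else 0) + (-t) * Xf r m i j)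
      = mat n n (\<lambda>(i,j). (if i = j then 1 - t^2 * s * of_nat r else 0) + (if i mod m = j mod m then t^2 * s else 0))"
    proof -
      have "mat n n (\<lambda>(i,j). (if i = j then 1 else 0) + t * Xf r m i j) *
        mat n n (\<lambda>(i,j). (if i = j then 1 else 0) + (-t) * Xf r m i j)
        = mat n n (\<lambda>(i,j). \<Sum>k = 0..<n. ((if i = k then 1 else 0) + t * Xf r m i k) * ((if k = j then 1 else 0) + (-t) * Xf r m k j))"
        by (simp add: mat_mult_mat case_prod_beta)
      also have "\<dots> = mat n n (\<lambda>(i,j). (if i = j then 1 - t^2 * s * of_nat r else 0) + (if i mod m = j mod m then t^2 * s else 0))"
      proof (rule eq_matI)
        fix i j assume ij: "i < dim_row (mat n n (\<lambda>(i,j). (if i = j then 1 - t^2 * s * of_nat r else 0) + (if i mod m = j mod m then t^2 * s else (0::rat))))"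
          "j < dim_col (mat n n (\<lambda>(i,j). (if i = j then 1 - t^2 * s * of_nat r else 0) + (if i mod m = j mod m then t^2 * s else (0::rat))))"
        hence i: "i < n" and j: "j < n" by auto
        have "(\<Sum>k = 0..<n. ((if i = k then 1 else 0) + t * Xf r m i k) * ((if k = j then 1 else 0) + (-t) * Xf r m k j))
          = (\<Sum>k = 0..<n. (if k = i then (if k = j then 1 else 0) - t * Xf r m k j else 0) + (if k = j then t * Xf r m i k else 0)
              - t^2 * (Xf r m i k * Xf r m k j))"
          by (intro sum.cong refl) (auto simp: algebra_simps power2_eq_square)
        also have "\<dots> = ((if i = j then 1 else 0) - t * Xf r m i j) + t * Xf r m i j - t^2 * (\<Sum>k = 0..<n. Xf r m i k * Xf r m k j)"
          using i j by (simp add: sum.distrib sum_subtractf sum_distrib_left)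
        also have "\<dots> = ((if i = j then 1 else 0) - t * Xf r m i j) + t * Xf r m i j - t^2 * (s * ((if i = j then of_nat r else 0) - (if i mod m = j mod m then 1 else 0)))"
          using X_sq[of i j] i j unfolding n_def s_def by simp
        also have "\<dots> = (if i = j then 1 - t^2 * s * of_nat r else 0) + (if i mod m = j mod m then t^2 * s else 0)"
          by (auto simp: algebra_simps)
        finally show "mat n n (\<lambda>(i,j). \<Sum>k = 0..<n. ((if i = k then 1 else 0) + t * Xf r m i k) * ((if k = j then 1 else 0) + (-t) * Xf r m k j)) $$ (i,j)
          = mat n n (\<lambda>(i,j). (if i = j then 1 - t^2 * s * of_nat r else 0) + (if i mod m = j mod m then t^2 * s else 0)) $$ (i,j)"
          using i j by simp
      qed auto
      finally show ?thesis .
    qed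
    also have "det (mat n n (\<lambda>(i,j). (if i = j then 1 - t^2 * s * of_nat r else 0) + (if i mod m = j mod m then t^2 * s else 0)))
       = (1 - t^2 * s * of_nat r + t^2 * s * of_nat r) ^ m * (1 - t^2 * s * of_nat r) ^ (n - m)"
      by (rule det_aI_bK) (use m0 r0 in \<open>auto simp: n_def\<close>)
    finally show ?thesis by (simp add: algebra_simps)
  qed
  obtain F where F0: "\<And>t. det (mat n n (\<lambda>(i,j). (if i = j then 1 else 0) + t * mat n n (\<lambda>(i,j). Xf r m i j) $$ (i,j))) = poly F t"
    using det_poly[of n "mat n n (\<lambda>(i,j). Xf r m i j)"] by blast
  have F: "D t = poly F t" for t
  proof -
    have "mat n n (\<lambda>(i,j). (if i = j then 1 else 0) + t * mat n n (\<lambda>(i,j). Xf r m i j) $$ (i,j))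
        = mat n n (\<lambda>(i,j). (if i = j then 1 else 0) + t * Xf r m i j)"
      by (rule eq_matI) auto
    thus ?thesis using F0[of t] by (simp add: D_def)
  qed
  define k where "k = (n - m) div 2"
  define H where "H = [:1, 0, - s * of_nat r:] ^ k"
  have H: "poly H t = (1 - s * of_nat r * t^2) ^ k" for t
    by (simp add: H_def algebra_simps power2_eq_square)
  have "F = H"
  proof (rule poly_sq_eq)
    fix t
    have "poly F t ^ 2 = D t * D (-t)" using Dsym F by (simp add: power2_eq_square)
    also have "\<dots> = ((1 - s * of_nat r * t^2) ^ k) ^ 2"
      using Dprod n_minus_m by (simp add: k_def n_def power_mult[symmetric] mult.commute)
    finally show "poly F t ^ 2 = poly H t ^ 2" using H by simp
  next
    have "poly F 0 = D 0" using F by simp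
    also have "D 0 = det (1\<^sub>m n)" unfolding D_def by (intro arg_cong[where f=det] eq_matI) auto
    finally show "poly F 0 = poly H 0" using H by simp
  qed (use H in simp)
  thus ?thesis using F H unfolding D_def k_def s_def n_def by simp
qed
end

lemma leg_one: "prime r \<Longrightarrow> Legendre 1 (int r) = 1"
  unfolding Legendre_def QuadRes_def
  by (auto simp: cong_def prime_gt_1_nat intro: exI[of _ 1])

lemma leg_pow:
  assumes "prime r" "2 < r"
  shows "Legendre (a ^ k) (int r) = Legendre a (int r) ^ k"
  by (induction k) (simp_all add: leg_one assms leg_mult)

lemma leg_gpow:
  assumes "prime r" "2 < r" "residue_primroot r g"
  shows "Legendre (int g ^ k) (int r) = (-1) ^ k"
  using leg_pow[OF assms(1,2)] leg_primroot[OF assms] by simp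

lemma gen_rep:
  assumes "prime r" "residue_primroot r g" "\<not> r dvd t"
  shows "\<exists>a<r - 1. [g ^ a = t] (mod r)"
proof -
  have r1: "1 < r" using assms(1) prime_gt_1_nat by blast
  have "t mod r \<in> totatives r"
  proof -
    have "0 < t mod r" using assms(3) by (simp add: dvd_eq_mod_eq_0 gr0I)
    moreover have "coprime (t mod r) r"
      using assms(1,3) by (metis coprime_commute coprime_mod_left_iff dvd_eq_mod_eq_0 prime_imp_coprime
          mod_greater_zero_iff_not_dvd r1 not_one_less_zero)
    moreover have "t mod r \<le> r" using r1 by (simp add: less_imp_le)
    ultimately show ?thesis by (simp add: totatives_def)
  qed
  then obtain a where "a < totient r" "g ^ a mod r = t mod r"
    using residue_primroot_is_generator[OF r1 assms(2)] unfolding bij_betw_def by force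
  thus ?thesis using assms(1) by (auto simp: totient_prime cong_def)
qed

lemma gen_crt:
  fixes P Q :: nat and A B :: int
  assumes g2: "gcd P Q = 2" and ev: "even (A - B)" and P: "0 < P" and Q: "0 < Q"
  shows "\<exists>s. s < P * Q div 2 \<and> [int s = A] (mod int P) \<and> [int s = B] (mod int Q)"
proof -
  obtain u v where uv: "u * int P + v * int Q = gcd (int P) (int Q)" using bezout_int by blast
  hence uv2: "u * int P + v * int Q = 2" using g2 by (simp add: gcd_int_def)
  obtain d where d: "A - B = 2 * d" using evenE[OF ev] by blast
  define s0 where "s0 = A - d * u * int P"
  have s0A: "[s0 = A] (mod int P)"
    unfolding s0_def by (simp add: cong_iff_dvd_diff)
  have "s0 - B = d * v * int Q" using d uv2 unfolding s0_def by (simp add: algebra_simps) (metis add_diff_cancel_left' distrib_left mult_2 uv2 mult.commute mult.left_commute)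
  hence s0B: "[s0 = B] (mod int Q)" by (simp add: cong_iff_dvd_diff)
  have "2 dvd P" "2 dvd Q" using g2 by (metis dvd_refl gcd_dvd1 gcd_dvd2)+
  obtain P2 where P2: "P = 2 * P2" using \<open>2 dvd P\<close> by (rule dvdE)
  obtain Q2 where Q2: "Q = 2 * Q2" using \<open>2 dvd Q\<close> by (rule dvdE)
  define L where "L = P * Q div 2"
  have L1: "L = P * Q2" and L2: "L = P2 * Q" using P2 Q2 by (simp_all add: L_def)
  have L0: "0 < L" using P Q L1 Q2 by simp
  define s where "s = nat (s0 mod int L)"
  have ss: "int s = s0 mod int L" using L0 by (simp add: s_def)
  have "[int s = s0] (mod int L)" using ss by (simp add: cong_def)
  have dP: "int P dvd int L" unfolding L1 by simp
  have dQ: "int Q dvd int L" unfolding L2 by simp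
  have "[int s = s0] (mod int P)" "[int s = s0] (mod int Q)"
    using \<open>[int s = s0] (mod int L)\<close> cong_dvd_modulus dP dQ by blast+
  hence "[int s = A] (mod int P)" "[int s = B] (mod int Q)"
    using s0A s0B cong_trans by blast+
  moreover have "s < L" using ss L0 by (metis of_nat_less_iff pos_mod_bound of_nat_0_less_iff)
  ultimately show ?thesis unfolding L_def by blast
qed

lemma cycD_char:
  fixes r m g t :: nat
  assumes r: "prime r" "2 < r" and m: "prime m" and rm: "r \<noteq> m" and g: "residue_primroot r g"
    and t: "t < r * m"
  shows "t \<in> {(y * m) mod (r * m) | y. y \<in> cyc_D r g 1} \<longleftrightarrow>
    m dvd t \<and> \<not> r dvd t \<and> Legendre (int m) (int r) * Legendre (int t) (int r) = -1"
proof
  assume "t \<in> {(y * m) mod (r * m) | y. y \<in> cyc_D r g 1}"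
  then obtain y where y1: "t = (y * m) mod (r * m)" "y \<in> cyc_D r g 1" by blast
  then obtain k where y2: "y = g ^ (2 * k + 1) mod r" "k < (r - 1) div 2"
    unfolding cyc_D_def by blast
  note y = y1(1) y2
  have yr: "y < r" using y(2) r by (simp add: prime_gt_0_nat)
  have ty: "t = y * m" using y(1) yr by simp
  have Ly: "Legendre (int y) (int r) = -1"
  proof -
    have "[y = g ^ (2*k+1)] (mod r)" using y2 by (simp add: cong_def)
    hence "[int y = int g ^ (2*k+1)] (mod int r)" by (metis cong_int_iff of_nat_power)
    hence "Legendre (int y) (int r) = Legendre (int g ^ (2 * k + 1)) (int r)"
      by (rule leg_cong)
    thus ?thesis using leg_gpow[OF r g, of "2*k+1"] by (simp del: power_Suc)
  qed
  have "\<not> [int y = 0] (mod int r)" using Ly by (auto simp: Legendre_def)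
  hence nry: "\<not> r dvd y" by (simp add: cong_0_iff)
  have nrm: "\<not> r dvd m" using r m rm by (metis prime_nat_iff prime_gt_1_nat primes_dvd_imp_eq)
  have "\<not> r dvd t" using ty nry nrm r(1) by (simp add: prime_dvd_mult_iff)
  moreover have "m dvd t" using ty by simp
  moreover have "Legendre (int m) (int r) * Legendre (int t) (int r) = -1"
  proof -
    have "\<not> [int m = 0] (mod int r)" using nrm by (simp add: cong_0_iff)
    hence "Legendre (int m) (int r) * Legendre (int m) (int r) = 1" by (rule leg_sq)
    thus ?thesis using ty Ly leg_mult[OF r, of "int y" "int m"] by (simp add: algebra_simps)
  qed
  ultimately show "m dvd t \<and> \<not> r dvd t \<and> Legendre (int m) (int r) * Legendre (int t) (int r) = -1" by blast
next
  assume H: "m dvd t \<and> \<not> r dvd t \<and> Legendre (int m) (int r) * Legendre (int t) (int r) = -1"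
  then obtain y where ty: "t = y * m" by (metis dvdE mult.commute)
  have m0: "0 < m" using m by (simp add: prime_gt_0_nat)
  have yr: "y < r" using t ty m0 by simp
  have nry: "\<not> r dvd y" using H ty by auto
  have nrm: "\<not> r dvd m" using r m rm by (metis prime_nat_iff prime_gt_1_nat primes_dvd_imp_eq)
  have Ly: "Legendre (int y) (int r) = -1"
  proof -
    have "\<not> [int m = 0] (mod int r)" using nrm by (simp add: cong_0_iff)
    hence "Legendre (int m) (int r) * Legendre (int m) (int r) = 1" by (rule leg_sq)
    moreover have "Legendre (int t) (int r) = Legendre (int y) (int r) * Legendre (int m) (int r)"
      using ty leg_mult[OF r, of "int y" "int m"] by simp
    ultimately show ?thesis using H by (metis mult.assoc mult.commute mult_1)
  qed
  obtain a where a: "a < r - 1" "[g ^ a = y] (mod r)" using gen_rep[OF r(1) g nry] by blast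
  have "Legendre (int y) (int r) = Legendre (int g ^ a) (int r)"
    by (rule leg_cong) (use a(2) in \<open>simp add: cong_sym_eq cong_int_iff flip: of_nat_power\<close>)
  hence "odd a" using Ly leg_gpow[OF r g, of a] by (auto simp: minus_one_power_iff)
  then obtain k where k: "a = 2 * k + 1" by (auto elim: oddE)
  have "k < (r - 1) div 2" using a(1) k by simp
  moreover have "y = g ^ (2 * k + 1) mod r" using a(2) yr k by (simp add: cong_def)
  ultimately have "y \<in> cyc_D r g 1" by (auto simp: cyc_D_def)
  moreover have "t = (y * m) mod (r * m)" using ty t by simp
  ultimately show "t \<in> {(y * m) mod (r * m) | y. y \<in> cyc_D r g 1}" by blast
qed


lemma wm_x_props:
  assumes p: "prime p" and q: "prime q" and pq: "p \<noteq> q"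
  shows "wm_x p q g < p * q \<and> [wm_x p q g = g] (mod p) \<and> [wm_x p q g = 1] (mod q)"
proof -
  have cop: "coprime p q" using p q pq by (simp add: primes_coprime)
  have N0: "0 < p * q" using p q by (simp add: prime_gt_0_nat)
  obtain y where y: "[y = g] (mod p)" "[y = 1] (mod q)" using binary_chinese_remainder_nat[OF cop] by blast
  have ex: "y mod (p*q) < p*q \<and> [y mod (p*q) = g] (mod p) \<and> [y mod (p*q) = 1] (mod q)"
    using y N0 by (simp add: cong_def mod_mod_cancel)
  have uq: "x = x'" if "x < p*q \<and> [x = g] (mod p) \<and> [x = 1] (mod q)" "x' < p*q \<and> [x' = g] (mod p) \<and> [x' = 1] (mod q)" for x x'
  proof -
    have "[x = x'] (mod p)" "[x = x'] (mod q)" using that by (meson cong_sym cong_trans)+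
    hence "[x = x'] (mod p*q)" using cop coprime_cong_mult_nat by blast
    thus ?thesis using that cong_less_modulus_unique_nat by blast
  qed
  have "\<exists>!x. x < p*q \<and> [x = g] (mod p) \<and> [x = 1] (mod q)" using ex uq by blast
  from theI'[OF this] show ?thesis unfolding wm_x_def .
qed

lemma leg_nat_cong: "[a = b] (mod r) \<Longrightarrow> Legendre (int a) (int r) = Legendre (int b) (int r)"
  by (rule leg_cong) (simp add: cong_int_iff)

lemma leg_nz_ndvd: "Legendre (int t) (int r) \<noteq> 0 \<Longrightarrow> \<not> r dvd t"
  by (auto simp: Legendre_def cong_0_iff)

lemma leg_gpow_nat:
  assumes "prime r" "2 < r" "residue_primroot r g"
  shows "Legendre (int (g ^ k)) (int r) = (-1) ^ k"
  using leg_gpow[OF assms] by simp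

context
  fixes p q g :: nat
  assumes p: "prime p" and q: "prime q" and pq: "p \<noteq> q" and op: "odd p" and oq: "odd q"
    and gg: "gcd (p - 1) (q - 1) = 2"
    and gp: "residue_primroot p g" and gq: "residue_primroot q g"
begin

lemma p2: "2 < p" using p op by (metis le_neq_implies_less prime_ge_2_nat even_numeral)
lemma q2: "2 < q" using q oq by (metis le_neq_implies_less prime_ge_2_nat even_numeral)

lemma D1_char:
  assumes t: "t < p * q"
  shows "t \<in> wm_D p q g 1 \<longleftrightarrow>
     \<not> p dvd t \<and> \<not> q dvd t \<and> Legendre (int t) (int p) * Legendre (int t) (int q) = -1"
proof
  assume "t \<in> wm_D p q g 1"
  then obtain s where s: "t = (g ^ s * wm_x p q g) mod (p * q)" "s < wm_e p q"
    unfolding wm_D_def by auto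
  note x = wm_x_props[OF p q pq, of g]
  have "[t = g ^ s * wm_x p q g] (mod p)" using s(1) by (simp add: cong_def mod_mod_cancel)
  also have "[g ^ s * wm_x p q g = g ^ s * g] (mod p)" using x by (intro cong_mult cong_refl) auto
  finally have tp: "[t = g ^ (s + 1)] (mod p)" by (simp add: mult.commute)
  have "[t = g ^ s * wm_x p q g] (mod q)" using s(1) by (simp add: cong_def mod_mod_cancel)
  also have "[g ^ s * wm_x p q g = g ^ s * 1] (mod q)" using x by (intro cong_mult cong_refl) auto
  finally have tq: "[t = g ^ s] (mod q)" by simp
  have Lp: "Legendre (int t) (int p) = (-1) ^ (s + 1)"
    using leg_nat_cong[OF tp] leg_gpow_nat[OF p p2 gp, of "s+1"] by (simp only:)
  have Lq: "Legendre (int t) (int q) = (-1) ^ s"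
    using leg_nat_cong[OF tq] leg_gpow_nat[OF q q2 gq] by simp
  show "\<not> p dvd t \<and> \<not> q dvd t \<and> Legendre (int t) (int p) * Legendre (int t) (int q) = -1"
    using Lp Lq leg_nz_ndvd[of t p] leg_nz_ndvd[of t q] by (auto simp: power_add)
next
  assume H: "\<not> p dvd t \<and> \<not> q dvd t \<and> Legendre (int t) (int p) * Legendre (int t) (int q) = -1"
  obtain a where a: "a < p - 1" "[g ^ a = t] (mod p)" using gen_rep[OF p gp] H by blast
  obtain b where b: "b < q - 1" "[g ^ b = t] (mod q)" using gen_rep[OF q gq] H by blast
  have La: "Legendre (int t) (int p) = (-1) ^ a"
    using leg_nat_cong[OF a(2)] leg_gpow_nat[OF p p2 gp] by simp
  have Lb: "Legendre (int t) (int q) = (-1) ^ b"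
    using leg_nat_cong[OF b(2)] leg_gpow_nat[OF q q2 gq] by simp
  have "(-1::int) ^ (a + b) = -1" using H La Lb by (simp add: power_add)
  hence "odd (a + b)" by (simp add: minus_one_power_iff split: if_splits)
  hence ev: "even ((int a - 1) - int b)" by auto
  obtain s where s: "s < (p - 1) * (q - 1) div 2" "[int s = int a - 1] (mod int (p - 1))" "[int s = int b] (mod int (q - 1))"
    using gen_crt[OF gg ev] p2 q2 by auto
  have ordp: "ord p g = p - 1" and ordq: "ord q g = q - 1"
    using gp gq p q by (auto simp: residue_primroot_def totient_prime)
  have cgp: "coprime p g" and cgq: "coprime q g" using gp gq by (auto simp: residue_primroot_def)
  note x = wm_x_props[OF p q pq, of g]
  have "[int (s + 1) = int a] (mod int (p - 1))" using s(2) by (simp add: cong_add_rcancel cong_diff_iff_cong_0 cong_iff_dvd_diff algebra_simps)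
  hence "[s + 1 = a] (mod (p - 1))" by (simp only: cong_int_iff)
  hence "[s + 1 = a] (mod ord p g)" using ordp by simp
  hence "[g ^ (s + 1) = g ^ a] (mod p)" using order_divides_expdiff[OF cgp, of "s+1" a] by (simp only:)
  hence "[g ^ s * g = t] (mod p)" using a(2) by (simp add: mult.commute cong_trans)
  moreover have "[g ^ s * wm_x p q g = g ^ s * g] (mod p)" using x by (intro cong_mult cong_refl) auto
  ultimately have cp: "[g ^ s * wm_x p q g = t] (mod p)" using cong_trans by blast
  have "[s = b] (mod (q - 1))" using s(3) by (simp only: cong_int_iff)
  hence "[s = b] (mod ord q g)" using ordq by simp
  hence "[g ^ s = g ^ b] (mod q)" using order_divides_expdiff[OF cgq, of s b] by (simp only:)
  hence "[g ^ s * 1 = t] (mod q)" using b(2) by (simp add: cong_trans)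
  moreover have "[g ^ s * wm_x p q g = g ^ s * 1] (mod q)" using x by (intro cong_mult cong_refl) auto
  ultimately have cq: "[g ^ s * wm_x p q g = t] (mod q)" using cong_trans by blast
  have "[g ^ s * wm_x p q g = t] (mod p * q)"
    using cp cq p q pq by (simp add: coprime_cong_mult_nat primes_coprime)
  hence "t = (g ^ s * wm_x p q g ^ 1) mod (p * q)" using t by (simp add: cong_def)
  moreover have "s < wm_e p q" using s(1) by (simp add: wm_e_def)
  ultimately show "t \<in> wm_D p q g 1" unfolding wm_D_def by blast
qed

lemma C1_char:
  assumes t: "t < p * q"
  shows "t \<in> wm_C1 p q g \<longleftrightarrow>
     (\<not> p dvd t \<and> \<not> q dvd t \<and> Legendre (int t) (int p) * Legendre (int t) (int q) = -1) \<or>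
     (q dvd t \<and> \<not> p dvd t \<and> Legendre (int q) (int p) * Legendre (int t) (int p) = -1) \<or>
     (p dvd t \<and> \<not> q dvd t \<and> Legendre (int p) (int q) * Legendre (int t) (int q) = -1)"
proof -
  have A: "t \<in> {(y * q) mod (p * q) | y. y \<in> cyc_D p g 1} \<longleftrightarrow>
     q dvd t \<and> \<not> p dvd t \<and> Legendre (int q) (int p) * Legendre (int t) (int p) = -1"
    by (rule cycD_char[OF p p2 q pq gp t])
  have "t \<in> {(y * p) mod (q * p) | y. y \<in> cyc_D q g 1} \<longleftrightarrow>
     p dvd t \<and> \<not> q dvd t \<and> Legendre (int p) (int q) * Legendre (int t) (int q) = -1"
    by (rule cycD_char[OF q q2 p pq[symmetric] gq]) (use t in \<open>simp add: mult.commute\<close>)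
  hence B: "t \<in> {(y * p) mod (p * q) | y. y \<in> cyc_D q g 1} \<longleftrightarrow>
     p dvd t \<and> \<not> q dvd t \<and> Legendre (int p) (int q) * Legendre (int t) (int q) = -1"
    by (simp add: mult.commute)
  show ?thesis unfolding wm_C1_def using D1_char[OF t] A B by blast
qed

end

lemma t_facts:
  fixes N r i j :: nat
  assumes N: "0 < N" and rN: "r dvd N" and i: "i < N" and j: "j < N"
  defines "t \<equiv> nat ((int i - int j) mod int N)"
  shows "t < N" "t = 0 \<longleftrightarrow> i = j" "r dvd t \<longleftrightarrow> i mod r = j mod r"
    "Legendre (int t) (int r) = Legendre (int i - int j) (int r)"
proof -
  have it: "int t = (int i - int j) mod int N" using N by (simp add: t_def)
  show "t < N" using N it by (metis of_nat_less_iff pos_mod_bound of_nat_0_less_iff)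
  have cN: "[int t = int i - int j] (mod int N)" using it by (simp add: cong_def)
  hence cr: "[int t = int i - int j] (mod int r)" using rN by (meson cong_dvd_modulus of_nat_dvd_iff)
  show "Legendre (int t) (int r) = Legendre (int i - int j) (int r)" using cr by (rule leg_cong)
  have "r dvd t \<longleftrightarrow> int r dvd int t" by simp
  also have "\<dots> \<longleftrightarrow> [int t = 0] (mod int r)" by (simp add: cong_0_iff)
  also have "\<dots> \<longleftrightarrow> [int i - int j = 0] (mod int r)" using cr by (meson cong_sym cong_trans)
  also have "\<dots> \<longleftrightarrow> int r dvd (int i - int j)" by (simp add: cong_0_iff)
  also have "\<dots> \<longleftrightarrow> [int i = int j] (mod int r)" by (simp add: cong_iff_dvd_diff)
  also have "\<dots> \<longleftrightarrow> [i = j] (mod r)" by (rule cong_int_iff)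
  also have "\<dots> \<longleftrightarrow> i mod r = j mod r" by (simp add: cong_def)
  finally show "r dvd t \<longleftrightarrow> i mod r = j mod r" .
  have "t = 0 \<longleftrightarrow> int t = 0" by simp
  also have "\<dots> \<longleftrightarrow> int N dvd (int i - int j)" unfolding it by (simp add: dvd_eq_mod_eq_0)
  also have "\<dots> \<longleftrightarrow> [int i = int j] (mod int N)" by (simp add: cong_iff_dvd_diff)
  also have "\<dots> \<longleftrightarrow> [i = j] (mod N)" by (simp add: cong_int_iff)
  also have "\<dots> \<longleftrightarrow> i = j" using i j cong_less_modulus_unique_nat by (auto simp: cong_refl)
  finally show "t = 0 \<longleftrightarrow> i = j" .
qed

lemma Delta_id:
  fixes a b :: rat
  shows "(1 + (2*a+1)*(2*b+1)) ^ 2 / 16 + (-1 - ((2*b+1) - (2*a+1) - 2) / 4) / 2 * ((2*a+1)*(2*b+1))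
      + (((2*b+1) - (2*a+1) - 2) / 4) ^ 2 + 3 / 2 * (((2*b+1) - (2*a+1) - 2) / 4) + 1 / 2
    = (a * (b + 1)) ^ 2"
  by (simp add: field_simps power2_eq_square)

lemma final_arith:
  fixes k1 k2 :: nat and M :: rat
  shows "(1/2) ^ (1 + 2*k1 + 2*k2 + 4*(k1*k2)) * M * (- (2 * of_nat k1)) ^ (k1 + 2*(k1*k2)) * (2 * of_nat k2 + 2) ^ (k2 + 2*(k1*k2))
    = M / 2 * ((- (2 * of_nat k1)) / 4) ^ k1 * ((2 * of_nat k2 + 2) / 4) ^ k2 * ((of_nat k1 * (of_nat k2 + 1)) ^ 2) ^ (k1*k2)"
proof -
  define a :: rat where "a = of_nat k1"
  define b :: rat where "b = of_nat k2"
  define h where "h = k1 * k2"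
  have l1: "(1/2::rat) ^ (1 + 2*k1 + 2*k2 + 4*h) = (1/2) * (1/4) ^ k1 * (1/4) ^ k2 * (1/16) ^ h"
  proof -
    have "(1/2::rat) ^ (1 + 2*k1 + 2*k2 + 4*h) = (1/2) * ((1/2)^2) ^ k1 * ((1/2)^2) ^ k2 * ((1/2)^4) ^ h"
      by (simp add: power_add power_mult)
    moreover have "((1/2::rat)^4) = 1/16" by (simp add: power_divide)
    moreover have "((1/2::rat)^2) = 1/4" by (simp add: power_divide)
    ultimately show ?thesis by simp
  qed
  have l2: "(- (2 * a)) ^ (k1 + 2*h) = (- (2*a)) ^ k1 * (4 * a^2) ^ h"
  proof -
    have "(- (2 * a)) ^ (k1 + 2*h) = (- (2*a)) ^ k1 * ((- (2*a))^2) ^ h" by (simp add: power_add power_mult)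
    thus ?thesis by (simp add: power2_eq_square)
  qed
  have l3: "(2 * b + 2) ^ (k2 + 2*h) = (2*b+2) ^ k2 * ((2*b+2)^2) ^ h"
    by (simp add: power_add power_mult)
  have l4: "((- (2 * a)) / 4) ^ k1 = (- (2*a)) ^ k1 * (1/4) ^ k1"
    by (simp only: power_divide power_one times_divide_eq_right mult_1_right)
  have l5: "((2 * b + 2) / 4) ^ k2 = (2*b+2) ^ k2 * (1/4) ^ k2"
    by (simp only: power_divide power_one times_divide_eq_right mult_1_right)
  have l6: "((a * (b + 1)) ^ 2) ^ h = (4 * a^2) ^ h * ((2*b+2)^2) ^ h * (1/16) ^ h"
  proof -
    have "(a * (b + 1)) ^ 2 = (4 * a^2) * ((2*b+2)^2) * (1/16)" by (simp add: power2_eq_square algebra_simps)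
    thus ?thesis by (simp only: power_mult_distrib)
  qed
  show ?thesis
    unfolding a_def[symmetric] b_def[symmetric] h_def[symmetric] l1 l2 l3 l4 l5 l6
    by (simp add: mult_ac)
qed

context
  fixes p q g :: nat
  assumes p: "prime p" and q: "prime q" and pq: "p \<noteq> q" and op: "odd p" and oq: "odd q"
    and p4: "p mod 4 = 1" and q4: "q mod 4 = 3" and gg: "gcd (p - 1) (q - 1) = 2"
    and gp: "residue_primroot p g" and gq: "residue_primroot q g"
begin

lemma pp2: "2 < p" using p op by (metis le_neq_implies_less prime_ge_2_nat even_numeral)
lemma qq2: "2 < q" using q oq by (metis le_neq_implies_less prime_ge_2_nat even_numeral)

lemma npq: "\<not> p dvd q" using p q pq by (metis prime_nat_iff prime_gt_1_nat primes_dvd_imp_eq)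
lemma nqp: "\<not> q dvd p" using p q pq by (metis prime_nat_iff prime_gt_1_nat primes_dvd_imp_eq)

lemma Lqp_vals: "Legendre (int q) (int p) = 1 \<or> Legendre (int q) (int p) = -1"
proof -
  have "\<not> [int q = 0] (mod int p)" using npq by (simp add: cong_0_iff)
  thus ?thesis using leg_vals[of "int q" "int p"] by (auto simp: leg_zero_iff)
qed

lemma Lpq_vals: "Legendre (int p) (int q) = 1 \<or> Legendre (int p) (int q) = -1"
proof -
  have "\<not> [int p = 0] (mod int q)" using nqp by (simp add: cong_0_iff)
  thus ?thesis using leg_vals[of "int p" "int q"] by (auto simp: leg_zero_iff)
qed

lemma QR_eq: "Legendre (int p) (int q) = Legendre (int q) (int p)"
proof -
  have "Legendre (int p) (int q) * Legendre (int q) (int p) = (-1::int) ^ ((p - 1) div 2 * ((q - 1) div 2))"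
    using Quadratic_Reciprocity[OF p pp2 q qq2 pq] by simp
  moreover have "even ((p - 1) div 2)" using p4 by presburger
  ultimately have "Legendre (int p) (int q) * Legendre (int q) (int p) = 1" by simp
  thus ?thesis using Lqp_vals Lpq_vals by auto
qed

lemma Lm1p: "Legendre (-1) (int p) = 1"
proof -
  have "even ((p - 1) div 2)" using p4 by presburger
  thus ?thesis using leg_minus_one[OF p pp2] by simp
qed

lemma Lm1q: "Legendre (-1) (int q) = -1"
proof -
  have "odd ((q - 1) div 2)" using q4 by presburger
  thus ?thesis using leg_minus_one[OF q qq2] by simp
qed

lemma leg_dvd0: "r dvd t \<Longrightarrow> Legendre (int t) (int r) = 0"
  by (simp add: leg_zero_iff cong_0_iff)

lemma leg_ndvd: "\<not> r dvd t \<Longrightarrow> Legendre (int t) (int r) = 1 \<or> Legendre (int t) (int r) = -1"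
  using leg_vals[of "int t" "int r"] by (auto simp: leg_zero_iff cong_0_iff)

lemma seq_val:
  assumes t: "t < p * q"
  shows "(if t \<in> wm_C1 p q g then (1::rat) else 0) =
    (1 - ((if t = 0 then 1 else 0)
       + of_int (Legendre (int q) (int p)) * (if q dvd t then of_int (Legendre (int t) (int p)) else 0)
       + of_int (Legendre (int q) (int p)) * (if p dvd t then of_int (Legendre (int t) (int q)) else 0)
       + of_int (Legendre (int t) (int p)) * of_int (Legendre (int t) (int q)))) / 2"
proof -
  note C = C1_char[OF p q pq op oq gg gp gq t]
  note QR = QR_eq
  show ?thesis
  proof (cases "p dvd t"; cases "q dvd t")
    assume a: "p dvd t" "q dvd t"
    hence "p * q dvd t" using p q pq by (simp add: primes_coprime divides_mult)
    hence t0: "t = 0" using t by (metis dvd_imp_le le_antisym less_le_not_le not_gr0)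
    have "Legendre 0 m = 0" for m by (simp add: Legendre_def)
    thus ?thesis using a C t0 by simp
  next
    assume a: "p dvd t" "\<not> q dvd t"
    have t0: "t \<noteq> 0" using a by (metis dvd_0_right)
    show ?thesis using a C t0 leg_ndvd[of q t] Lqp_vals QR by (auto simp: leg_dvd0)
  next
    assume a: "\<not> p dvd t" "q dvd t"
    have t0: "t \<noteq> 0" using a by (metis dvd_0_right)
    show ?thesis using a C t0 leg_ndvd[of p t] Lqp_vals by (auto simp: leg_dvd0)
  next
    assume a: "\<not> p dvd t" "\<not> q dvd t"
    have t0: "t \<noteq> 0" using a by (metis dvd_0_right)
    show ?thesis using a C t0 leg_ndvd[of p t] leg_ndvd[of q t] by auto
  qed
qed


lemma det_main:
  "det (wm_matrix p q g) = (1/2) ^ (p*q) * (of_nat (p*q) - 1) *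
     (1 - of_nat p) ^ ((p*q - q) div 2) * (1 + of_nat q) ^ ((q*p - p) div 2)"
proof -
  define N where "N = p * q"
  have N0: "0 < N" using p q by (simp add: N_def prime_gt_0_nat)
  have p0: "0 < p" and q0: "0 < q" using p q by (auto simp: prime_gt_0_nat)
  have cop: "coprime p q" using p q pq by (simp add: primes_coprime)
  define c :: rat where "c = of_int (Legendre (int q) (int p))"
  have c2: "c * c = 1" using Lqp_vals by (auto simp: c_def)
  define Be where "Be i j = (if i = j then 1 else 0) + c * Xf p q i j + c * Xf q p i j
      + of_int (Legendre (int i - int j) (int p) * Legendre (int i - int j) (int q))" for i j
  define Y2 where "Y2 = mat N N (\<lambda>(i,j). (if i = j then 1 else 0) + c * Xf p q i j)"
  define Y3 where "Y3 = mat N N (\<lambda>(i,j). (if i = j then 1 else 0) + c * Xf q p i j)"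
  have Y2c: "Y2 \<in> carrier_mat N N" and Y3c: "Y3 \<in> carrier_mat N N" by (auto simp: Y2_def Y3_def)
  have Yprod: "(Y2 * Y3) $$ (i,j) = (\<Sum>k = 0..<N. ((if i = k then 1 else 0) + c * Xf p q i k) * ((if k = j then 1 else 0) + c * Xf q p k j))"
    if "i < N" "j < N" for i j
    using that by (simp add: Y2_def Y3_def mat_mult_mat)
  have YB: "(Y2 * Y3) $$ (i,j) = Be i j" if i: "i < N" and j: "j < N" for i j
  proof -
    have "(\<Sum>k = 0..<N. ((if i = k then 1 else 0) + c * Xf p q i k) * ((if k = j then 1 else 0) + c * Xf q p k j))
      = (\<Sum>k = 0..<N. (if k = i then (if k = j then 1 else 0) + c * Xf q p k j else 0) + (if k = j then c * Xf p q i k else 0)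
          + (c * c) * (Xf p q i k * Xf q p k j))"
      by (intro sum.cong refl) (auto simp: algebra_simps)
    also have "\<dots> = ((if i = j then 1 else 0) + c * Xf q p i j) + c * Xf p q i j + (c * c) * (\<Sum>k = 0..<N. Xf p q i k * Xf q p k j)"
      using i j by (simp add: sum.distrib sum_distrib_left)
    also have "(\<Sum>k = 0..<N. Xf p q i k * Xf q p k j) = of_int (Legendre (int i - int j) (int p) * Legendre (int i - int j) (int q))"
      using X_cross[OF cop p0 q0, of i j] i j by (simp add: N_def)
    finally show ?thesis using Yprod[OF i j] c2 by (simp add: Be_def algebra_simps)
  qed
  have rs3: "(\<Sum>k = 0..<N. (if l = k then 1 else 0) + c * Xf q p l k) = 1" if l: "l < N" for l
  proof -
    have "(\<Sum>k = 0..<q*p. Xf q p l k) = 0" using X_rowsum[OF q qq2 p pp2 pq[symmetric] gq, of l] l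
      by (simp add: N_def mult.commute)
    thus ?thesis using l by (simp add: sum.distrib sum_distrib_left[symmetric] N_def mult.commute)
  qed
  have rs2: "(\<Sum>l = 0..<N. (if i = l then 1 else 0) + c * Xf p q i l) = 1" if i: "i < N" for i
  proof -
    have "(\<Sum>l = 0..<p*q. Xf p q i l) = 0" using X_rowsum[OF p pp2 q qq2 pq gp, of i] i by (simp add: N_def)
    thus ?thesis using i by (simp add: sum.distrib sum_distrib_left[symmetric] N_def)
  qed
  have rowB: "(\<Sum>k = 0..<N. Be i k) = 1" if i: "i < N" for i
  proof -
    have "(\<Sum>k = 0..<N. Be i k) = (\<Sum>k = 0..<N. \<Sum>l = 0..<N. ((if i = l then 1 else 0) + c * Xf p q i l) * ((if l = k then 1 else 0) + c * Xf q p l k))"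
      using YB Yprod i by (intro sum.cong refl) auto
    also have "\<dots> = (\<Sum>l = 0..<N. ((if i = l then 1 else 0) + c * Xf p q i l) * (\<Sum>k = 0..<N. (if l = k then 1 else 0) + c * Xf q p l k))"
      by (subst sum.swap) (simp add: sum_distrib_left)
    also have "\<dots> = (\<Sum>l = 0..<N. ((if i = l then 1 else 0) + c * Xf p q i l))"
      using rs3 by (intro sum.cong refl) auto
    also have "\<dots> = 1" using rs2[OF i] .
    finally show ?thesis .
  qed
  define Z where "Z = mat N N (\<lambda>(i,j). 1 - Be i j)"
  have AZ: "wm_matrix p q g = (1/2) \<cdot>\<^sub>m Z"
  proof (rule eq_matI)
    fix i j assume "i < dim_row ((1/2) \<cdot>\<^sub>m Z)" "j < dim_col ((1/2) \<cdot>\<^sub>m Z)"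
    hence i: "i < N" and j: "j < N" by (auto simp: Z_def)
    define t where "t = nat ((int i - int j) mod int N)"
    note tp = t_facts[OF N0 _ i j, of p, folded t_def] and tq = t_facts[OF N0 _ i j, of q, folded t_def]
    have pN: "p dvd N" and qN: "q dvd N" by (simp_all add: N_def)
    have tN: "t < N" using tp(1)[OF pN] .
    have "wm_matrix p q g $$ (i,j) = (if t \<in> wm_C1 p q g then 1 else 0)"
      using i j tN by (simp add: wm_matrix_def wm_seq_def N_def t_def)
    also have "\<dots> = (1 - Be i j) / 2"
    proof -
      have e1: "(if t = 0 then 1 else 0) = (if i = j then (1::rat) else 0)" using tp(2)[OF pN] by simp
      have e2: "(if q dvd t then of_int (Legendre (int t) (int p)) else 0) = Xf p q i j"
        using tq(3)[OF qN] tp(4)[OF pN] by (simp add: Xf_def)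
      have e3: "(if p dvd t then of_int (Legendre (int t) (int q)) else 0) = Xf q p i j"
        using tp(3)[OF pN] tq(4)[OF qN] by (simp add: Xf_def)
      have e4: "(of_int (Legendre (int t) (int p)) * of_int (Legendre (int t) (int q)) :: rat)
         = of_int (Legendre (int i - int j) (int p) * Legendre (int i - int j) (int q))"
        using tp(4)[OF pN] tq(4)[OF qN] by simp
      show ?thesis using seq_val[of t] tN unfolding N_def
        by (simp only: e1 e2 e3 e4 Be_def c_def)
    qed
    finally show "wm_matrix p q g $$ (i,j) = ((1/2) \<cdot>\<^sub>m Z) $$ (i,j)" using i j by (simp add: Z_def)
  qed (auto simp: wm_matrix_def Z_def N_def)
  define \<alpha> :: rat where "\<alpha> = 1 / (of_nat N - 1)"
  have N1: "of_nat N - 1 \<noteq> (0::rat)"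
  proof -
    have "3 * 3 \<le> p * q" using pp2 qq2 by (intro mult_le_mono) auto
    hence "1 < N" by (simp add: N_def)
    thus ?thesis by simp
  qed
  define W where "W = mat N N (\<lambda>(i,j). (if i = j then 1 else 0) + (if i mod 1 = j mod 1 then - \<alpha> else 0))"
  have Wc: "W \<in> carrier_mat N N" and Zc: "Z \<in> carrier_mat N N" by (auto simp: W_def Z_def)
  have detW: "det W = 1 - \<alpha> * of_nat N"
    using det_aI_bK[of 1 N N "1::rat" "- \<alpha>"] N0 by (simp add: W_def)
  have detW': "det W = - \<alpha>" using detW N1 by (simp add: \<alpha>_def field_simps)
  have ZW: "Z * W = (-1) \<cdot>\<^sub>m (Y2 * Y3)"
  proof (rule eq_matI)
    fix i j assume ij: "i < dim_row ((-1) \<cdot>\<^sub>m (Y2 * Y3))" "j < dim_col ((-1) \<cdot>\<^sub>m (Y2 * Y3))"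
    hence i: "i < N" and j: "j < N" using Y2c Y3c by auto
    have "(Z * W) $$ (i,j) = (\<Sum>k = 0..<N. (1 - Be i k) * ((if k = j then 1 else 0) - \<alpha>))"
      using i j by (simp add: Z_def W_def mat_mult_mat)
    also have "\<dots> = (\<Sum>k = 0..<N. (if k = j then 1 - Be i k else 0) - \<alpha> * (1 - Be i k))"
      by (intro sum.cong refl) (simp add: algebra_simps)
    also have "\<dots> = (\<Sum>k = 0..<N. (if k = j then 1 - Be i k else 0)) - \<alpha> * (\<Sum>k = 0..<N. (1 - Be i k))"
      by (simp only: sum_subtractf[of "\<lambda>k. if k = j then 1 - Be i k else 0" "\<lambda>k. \<alpha> * (1 - Be i k)"] sum_distrib_left)
    also have "\<dots> = (1 - Be i j) - \<alpha> * (of_nat N - 1)"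
      using j rowB[OF i] by (simp add: sum_subtractf)
    also have "\<dots> = - Be i j" using N1 by (simp add: \<alpha>_def)
    finally show "(Z * W) $$ (i,j) = ((-1) \<cdot>\<^sub>m (Y2 * Y3)) $$ (i,j)"
      using YB[OF i j] i j Y2c Y3c by simp
  qed (use Y2c Y3c in \<open>auto simp: Z_def W_def\<close>)
  have oddN: "odd N" using op oq by (simp add: N_def)
  have "det Z * det W = det (Z * W)" using det_mult[OF Zc Wc] by simp
  also have "\<dots> = (-1) ^ N * det (Y2 * Y3)" using ZW Y2c Y3c by simp
  also have "\<dots> = - det (Y2 * Y3)" using oddN by simp
  finally have "det Z * (- \<alpha>) = - det (Y2 * Y3)" using detW' by simp
  hence detZ: "det Z = (of_nat N - 1) * det (Y2 * Y3)" using N1 by (simp add: \<alpha>_def field_simps)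
  have dY2: "det Y2 = (1 - of_nat p) ^ ((p*q - q) div 2)"
    using det_X[OF p pp2 q qq2 pq gp, of c] c2 Lm1p by (simp add: Y2_def N_def power2_eq_square)
  have dY3: "det Y3 = (1 + of_nat q) ^ ((q*p - p) div 2)"
  proof -
    have "Y3 = mat (q*p) (q*p) (\<lambda>(i,j). (if i = j then 1 else 0) + c * Xf q p i j)"
      by (simp add: Y3_def N_def mult.commute)
    thus ?thesis using det_X[OF q qq2 p pp2 pq[symmetric] gq, of c] c2 Lm1q by (simp add: power2_eq_square)
  qed
  have "det (wm_matrix p q g) = (1/2) ^ N * det Z" using AZ Zc by simp
  also have "\<dots> = (1/2) ^ N * (of_nat N - 1) * (det Y2 * det Y3)"
    using detZ det_mult[OF Y2c Y3c] by simp
  finally show ?thesis using dY2 dY3 by (simp add: N_def mult.assoc)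
qed
end

theorem lemma6:
  fixes p q g :: nat
  assumes "prime p" and "prime q" and "p \<noteq> q" and "odd p" and "odd q"
    and "p mod 4 = 1" and "q mod 4 = 3"
    and "gcd (p - 1) (q - 1) = 2"
    and "residue_primroot p g" and "residue_primroot q g"
  shows "\<exists>\<epsilon>::rat. \<epsilon> \<in> {1, -1} \<and>
    (let N = p * q; e = wm_e p q;
         d = (of_nat q - of_nat p - 2) / 4 :: rat;
         \<Delta> = (1 + of_nat N) ^ 2 / 16 + (\<epsilon> - d) / 2 * of_nat N + d ^ 2 + 3 / 2 * d + 1 / 2
     in det (wm_matrix p q g) =
        (of_nat N - 1) / 2 * ((1 - of_nat p) / 4) ^ ((p - 1) div 2)
          * ((1 + of_nat q) / 4) ^ ((q - 1) div 2) * \<Delta> ^ (e div 2))"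
proof -
  note dm = det_main[OF assms]
  obtain k1 where k1: "p = 2 * k1 + 1" using assms(4) by (metis oddE)
  obtain k2 where k2: "q = 2 * k2 + 1" using assms(5) by (metis oddE)
  define a :: rat where "a = of_nat k1"
  define b :: rat where "b = of_nat k2"
  have ofp: "(of_nat p :: rat) = 2 * a + 1" by (simp add: k1 a_def)
  have ofq: "(of_nat q :: rat) = 2 * b + 1" by (simp add: k2 b_def)
  have ofN: "(of_nat (p * q) :: rat) = (2 * a + 1) * (2 * b + 1)" by (simp add: ofp ofq)
  have e2: "wm_e p q div 2 = k1 * k2" by (simp add: wm_e_def k1 k2)
  have ep: "(p - 1) div 2 = k1" and eq: "(q - 1) div 2 = k2" by (simp_all add: k1 k2)
  have NN: "p * q = 1 + 2*k1 + 2*k2 + 4*(k1*k2)" by (simp add: k1 k2 algebra_simps)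
  have E1: "(p * q - q) div 2 = k1 + 2*(k1*k2)"
  proof -
    have "p * q - q = 2 * (k1 + 2*(k1*k2))" by (simp add: k1 k2 algebra_simps)
    thus ?thesis by simp
  qed
  have E2: "(q * p - p) div 2 = k2 + 2*(k1*k2)"
  proof -
    have "q * p - p = 2 * (k2 + 2*(k1*k2))" by (simp add: k1 k2 algebra_simps)
    thus ?thesis by simp
  qed
  have D: "(1 + of_nat (p*q)) ^ 2 / 16 + (-1 - (of_nat q - of_nat p - 2) / 4) / 2 * of_nat (p*q)
      + ((of_nat q - of_nat p - 2) / 4) ^ 2 + 3 / 2 * ((of_nat q - of_nat p - 2) / 4) + 1 / 2
    = (a * (b + 1)) ^ 2"
    unfolding ofN ofp ofq by (rule Delta_id)
  have "det (wm_matrix p q g) = (1/2) ^ (1 + 2*k1 + 2*k2 + 4*(k1*k2)) * (of_nat (p*q) - 1)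
      * (- (2 * a)) ^ (k1 + 2*(k1*k2)) * (2 * b + 2) ^ (k2 + 2*(k1*k2))"
  proof -
    have "(1 - of_nat p :: rat) = - (2 * a)" "(1 + of_nat q :: rat) = 2 * b + 2" by (simp_all add: ofp ofq)
    thus ?thesis using dm by (simp only: NN[symmetric] E1 E2)
  qed
  also have "\<dots> = (of_nat (p*q) - 1) / 2 * ((- (2 * a)) / 4) ^ k1 * ((2 * b + 2) / 4) ^ k2 * ((a * (b + 1)) ^ 2) ^ (k1*k2)"
    unfolding a_def b_def by (rule final_arith)
  finally have fin: "det (wm_matrix p q g) = (of_nat (p*q) - 1) / 2 * ((- (2 * a)) / 4) ^ k1 * ((2 * b + 2) / 4) ^ k2 * ((a * (b + 1)) ^ 2) ^ (k1*k2)" .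
  show ?thesis
  proof (intro exI[of _ "-1"] conjI)
    show "(-1::rat) \<in> {1, -1}" by simp
    have h12: "(1 - of_nat p :: rat) = - (2 * a)" "(1 + of_nat q :: rat) = 2 * b + 2" by (simp_all add: ofp ofq)
    show "let N = p * q; e = wm_e p q;
         d = (of_nat q - of_nat p - 2) / 4 :: rat;
         \<Delta> = (1 + of_nat N) ^ 2 / 16 + (-1 - d) / 2 * of_nat N + d ^ 2 + 3 / 2 * d + 1 / 2
     in det (wm_matrix p q g) =
        (of_nat N - 1) / 2 * ((1 - of_nat p) / 4) ^ ((p - 1) div 2)
          * ((1 + of_nat q) / 4) ^ ((q - 1) div 2) * \<Delta> ^ (e div 2)"
      unfolding Let_def D e2 ep eq fin by (simp only: h12)
  qed
qed

end
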